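(* Let $E$ be a graph with finitely many vertices and $K$ a field of characteristic $0$, and suppose the Leavitt path algebra $L_K(E)$ is noncommutative. Then the multiplicative group $L_K(E)^\times$ contains a non-cyclic free subgroup.
   Context: A graph $E=(E^0,E^1,r,s)$; the Leavitt path algebra $L_K(E)$ is the free associative $K$-algebra generated by $E^0\cup E^1\cup\{e^*:e\in E^1\}$ subject to: $vv'=\delta_{v,v'}v$; $s(e)e=er(e)=e$; $r(e)e^*=e^*s(e)=e^*$; $e^*f=\delta_{e,f}r(e)$; and $v=\sum_{s(e)=v}ee^*$ for every vertex $v$ emitting a finite nonzero number of edges. When $E^0$ is finite, $L_K(E)$ is unital with $1=\sum_{v\in E^0}v$, and $L_K(E)^\times$ is its group of units. *)

theory Defs
  imports "HOL-Algebra.Algebra"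
begin

datatype ('v, 'e) lgen = Vx 'v | Ed 'e | Gh 'e

definition lgens :: "'v set \<Rightarrow> 'e set \<Rightarrow> ('v, 'e) lgen set" where
  "lgens V E = Vx ` V \<union> Ed ` E \<union> Gh ` E"

definition free_alg :: "'g set \<Rightarrow> ('g list \<Rightarrow> 'k::field) ring" where
  "free_alg A = \<lparr>carrier = {f. finite {w. f w \<noteq> 0} \<and> (\<forall>w. f w \<noteq> 0 \<longrightarrow> set w \<subseteq> A)},
                 monoid.mult = (\<lambda>f g w. \<Sum>i\<le>length w. f (take i w) * g (drop i w)),
                 monoid.one = (\<lambda>w. if w = [] then 1 else 0),
                 ring.zero = (\<lambda>w. 0),
                 ring.add = (\<lambda>f g w. f w + g w)\<rparr>"

definition mono :: "'g list \<Rightarrow> 'g list \<Rightarrow> 'k::field" where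
  "mono w = (\<lambda>u. if u = w then 1 else 0)"

definition fdiff :: "('a \<Rightarrow> 'k::field) \<Rightarrow> ('a \<Rightarrow> 'k) \<Rightarrow> 'a \<Rightarrow> 'k" where
  "fdiff a b = (\<lambda>w. a w - b w)"

text \<open>The free algebra is built unital (empty word); the last relation identifies its unit with
  the sum of the vertices, which is the unit of L_K(E) for finite E^0.\<close>
definition lpa_rels :: "'v set \<Rightarrow> 'e set \<Rightarrow> ('e \<Rightarrow> 'v) \<Rightarrow> ('e \<Rightarrow> 'v)
    \<Rightarrow> (('v, 'e) lgen list \<Rightarrow> 'k::field) set" where
  "lpa_rels V E r s =
     {fdiff (mono [Vx v, Vx v']) (if v = v' then mono [Vx v] else (\<lambda>_. 0)) | v v'. v \<in> V \<and> v' \<in> V}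
   \<union> {fdiff (mono [Vx (s e), Ed e]) (mono [Ed e]) | e. e \<in> E}
   \<union> {fdiff (mono [Ed e, Vx (r e)]) (mono [Ed e]) | e. e \<in> E}
   \<union> {fdiff (mono [Vx (r e), Gh e]) (mono [Gh e]) | e. e \<in> E}
   \<union> {fdiff (mono [Gh e, Vx (s e)]) (mono [Gh e]) | e. e \<in> E}
   \<union> {fdiff (mono [Gh e, Ed f]) (if e = f then mono [Vx (r e)] else (\<lambda>_. 0)) | e f. e \<in> E \<and> f \<in> E}
   \<union> {fdiff (mono [Vx v]) (\<lambda>w. \<Sum>e\<in>{e\<in>E. s e = v}. mono [Ed e, Gh e] w) | v.
        v \<in> V \<and> finite {e\<in>E. s e = v} \<and> {e\<in>E. s e = v} \<noteq> {}}
   \<union> {fdiff (mono []) (\<lambda>w. \<Sum>v\<in>V. mono [Vx v] w)}"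

definition leavitt :: "'v set \<Rightarrow> 'e set \<Rightarrow> ('e \<Rightarrow> 'v) \<Rightarrow> ('e \<Rightarrow> 'v)
    \<Rightarrow> (('v, 'e) lgen list \<Rightarrow> 'k::field) set ring" where
  "leavitt V E r s =
     (free_alg (lgens V E)) Quot (genideal (free_alg (lgens V E)) (lpa_rels V E r s))"

definition noncommutative :: "('a, 'b) ring_scheme \<Rightarrow> bool" where
  "noncommutative R \<longleftrightarrow> (\<exists>x\<in>carrier R. \<exists>y\<in>carrier R. x \<otimes>\<^bsub>R\<^esub> y \<noteq> y \<otimes>\<^bsub>R\<^esub> x)"

text \<open>A word is a list of (generator, exponent sign); True = +1, False = -1.\<close>
definition word_eval :: "('a, 'b) monoid_scheme \<Rightarrow> ('a \<times> bool) list \<Rightarrow> 'a" where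
  "word_eval G ws = foldr (\<lambda>(b, e) acc. (if e then b else inv\<^bsub>G\<^esub> b) \<otimes>\<^bsub>G\<^esub> acc) ws \<one>\<^bsub>G\<^esub>"

definition reduced_word :: "('a \<times> bool) list \<Rightarrow> bool" where
  "reduced_word ws \<longleftrightarrow>
     (\<forall>i. Suc i < length ws \<longrightarrow> \<not> (fst (ws ! i) = fst (ws ! Suc i) \<and> snd (ws ! i) \<noteq> snd (ws ! Suc i)))"

definition free_basis :: "('a, 'b) monoid_scheme \<Rightarrow> 'a set \<Rightarrow> bool" where
  "free_basis G B \<longleftrightarrow> B \<subseteq> carrier G \<and>
     (\<forall>ws. ws \<noteq> [] \<and> set (map fst ws) \<subseteq> B \<and> reduced_word ws \<longrightarrow> word_eval G ws \<noteq> \<one>\<^bsub>G\<^esub>)"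

definition free_subgroup :: "('a, 'b) monoid_scheme \<Rightarrow> 'a set \<Rightarrow> bool" where
  "free_subgroup G H \<longleftrightarrow> subgroup H G \<and> (\<exists>B. free_basis G B \<and> generate G B = H)"

definition cyclic_subgroup :: "('a, 'b) monoid_scheme \<Rightarrow> 'a set \<Rightarrow> bool" where
  "cyclic_subgroup G H \<longleftrightarrow> (\<exists>g\<in>carrier G. H = generate G {g})"

end

theory Submission
  imports Defs
begin

definition conv :: "('g list \<Rightarrow> 'k::field) \<Rightarrow> ('g list \<Rightarrow> 'k) \<Rightarrow> 'g list \<Rightarrow> 'k" where
  "conv f g = (\<lambda>w. \<Sum>i\<le>length w. f (take i w) * g (drop i w))"

lemma fa_mult: "monoid.mult (free_alg A) = conv"
  by (rule ext)+ (simp add: free_alg_def conv_def)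
lemma fa_add: "ring.add (free_alg A) = (\<lambda>f g w. f w + g w)"
  by (simp add: free_alg_def)
lemma fa_one: "monoid.one (free_alg A) = mono []"
  by (auto simp add: free_alg_def mono_def)
lemma fa_zero: "ring.zero (free_alg A) = (\<lambda>w. 0)"
  by (simp add: free_alg_def)
lemma fa_carrier: "carrier (free_alg A) = {f. finite {w. f w \<noteq> 0} \<and> (\<forall>w. f w \<noteq> 0 \<longrightarrow> set w \<subseteq> A)}"
  by (simp add: free_alg_def)

lemma conv_pairs:
  assumes "finite F" "finite G" "{w. f w \<noteq> 0} \<subseteq> F" "{w. g w \<noteq> 0} \<subseteq> G"
  shows "conv f g w = (\<Sum>u\<in>F. \<Sum>v\<in>G. if u @ v = w then f u * g v else 0)"
proof -
  define I0 where "I0 = {i. i \<le> length w \<and> take i w \<in> F \<and> drop i w \<in> G}"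
  define P where "P = {p \<in> F \<times> G. fst p @ snd p = w}"
  have "conv f g w = (\<Sum>i\<in>I0. f (take i w) * g (drop i w))"
    unfolding conv_def
    by (rule sum.mono_neutral_right) (use assms in \<open>auto simp: I0_def\<close>)
  also have "\<dots> = (\<Sum>p\<in>P. f (fst p) * g (snd p))"
    by (rule sum.reindex_bij_witness[of _ "\<lambda>p. length (fst p)" "\<lambda>i. (take i w, drop i w)"])
       (auto simp: I0_def P_def)
  also have "\<dots> = (\<Sum>p\<in>F \<times> G. if fst p @ snd p = w then f (fst p) * g (snd p) else 0)"
    unfolding P_def using assms by (simp add: sum.inter_filter)
  also have "\<dots> = (\<Sum>u\<in>F. \<Sum>v\<in>G. if u @ v = w then f u * g v else 0)"
    by (simp add: sum.cartesian_product split_beta)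
  finally show ?thesis .
qed

lemma conv_supp:
  "{w. conv f g w \<noteq> 0} \<subseteq> (\<lambda>p. fst p @ snd p) ` ({w. f w \<noteq> 0} \<times> {w. g w \<noteq> 0})"
proof
  fix w assume "w \<in> {w. conv f g w \<noteq> 0}"
  then obtain i where "i \<le> length w" "f (take i w) * g (drop i w) \<noteq> 0"
    unfolding conv_def by (metis (mono_tags, lifting) atMost_iff mem_Collect_eq sum.neutral)
  then show "w \<in> (\<lambda>p. fst p @ snd p) ` ({w. f w \<noteq> 0} \<times> {w. g w \<noteq> 0})"
    by (auto intro!: image_eqI[of _ _ "(take i w, drop i w)"])
qed

lemma if_times_zero: "(if c then a else 0) * (b::'a::field) = (if c then a * b else 0)"
  by simp

lemma times_if_zero: "(a::'a::field) * (if c then b else 0) = (if c then a * b else 0)"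
  by simp
lemma times_if_one: "(a::'a::field) * (if c then 1 else 0) = (if c then a else 0)"
  by simp

lemma conv_weights:
  assumes "finite F" "finite G" "{w. f w \<noteq> 0} \<subseteq> F" "{w. g w \<noteq> 0} \<subseteq> G"
    and "finite Xs" "(\<lambda>p. fst p @ snd p) ` (F \<times> G) \<subseteq> Xs"
  shows "(\<Sum>x\<in>Xs. conv f g x * Wt x) = (\<Sum>a\<in>F. \<Sum>b\<in>G. f a * g b * Wt (a @ b))"
proof -
  have "(\<Sum>x\<in>Xs. conv f g x * Wt x) = (\<Sum>x\<in>Xs. \<Sum>a\<in>F. \<Sum>b\<in>G. if a @ b = x then f a * g b * Wt x else 0)"
    unfolding conv_pairs[OF assms(1-4)]
    by (intro sum.cong refl) (simp add: sum_distrib_right if_times_zero)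
  also have "\<dots> = (\<Sum>a\<in>F. \<Sum>b\<in>G. \<Sum>x\<in>Xs. if a @ b = x then f a * g b * Wt x else 0)"
    by (simp add: sum.swap[of _ Xs] sum.swap[of _ Xs G])
  also have "\<dots> = (\<Sum>a\<in>F. \<Sum>b\<in>G. f a * g b * Wt (a @ b))"
  proof (intro sum.cong refl)
    fix a b assume "a \<in> F" "b \<in> G"
    then have "a @ b \<in> Xs" using assms(6) by force
    then show "(\<Sum>x\<in>Xs. if a @ b = x then f a * g b * Wt x else 0) = f a * g b * Wt (a @ b)"
      using assms(5) by (simp add: sum.delta)
  qed
  finally show ?thesis .
qed

definition supp :: "('a \<Rightarrow> 'k::zero) \<Rightarrow> 'a set" where "supp f = {w. f w \<noteq> 0}"

lemma conv_closed:
  assumes "f \<in> carrier (free_alg A)" "g \<in> carrier (free_alg A)"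
  shows "conv f g \<in> carrier (free_alg A)"
proof -
  have fin: "finite ((\<lambda>p. fst p @ snd p) ` ({w. f w \<noteq> 0} \<times> {w. g w \<noteq> 0}))"
    using assms by (simp add: fa_carrier)
  have "set w \<subseteq> A" if "conv f g w \<noteq> 0" for w
  proof -
    have "w \<in> (\<lambda>p. fst p @ snd p) ` ({w. f w \<noteq> 0} \<times> {w. g w \<noteq> 0})"
      using that conv_supp[of f g] by blast
    then obtain a b where "w = a @ b" "f a \<noteq> 0" "g b \<noteq> 0" by auto
    then show ?thesis using assms by (auto simp: fa_carrier)
  qed
  moreover have "finite {w. conv f g w \<noteq> 0}"
    by (rule finite_subset[OF conv_supp fin])
  ultimately show ?thesis by (simp add: fa_carrier)
qed

lemma conv_assoc:
  assumes "f \<in> carrier (free_alg A)" "g \<in> carrier (free_alg A)" "h \<in> carrier (free_alg A)"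
  shows "conv (conv f g) h = conv f (conv g h)"
proof
  fix w
  define F where "F = {w. f w \<noteq> 0}"
  define G where "G = {w. g w \<noteq> 0}"
  define Hs where "Hs = {w. h w \<noteq> 0}"
  define FG where "FG = (\<lambda>p. fst p @ snd p) ` (F \<times> G)"
  define GH where "GH = (\<lambda>p. fst p @ snd p) ` (G \<times> Hs)"
  have fF: "finite F" and fG: "finite G" and fH: "finite Hs"
    using assms by (auto simp: fa_carrier F_def G_def Hs_def)
  have fFG: "finite FG" and fGH: "finite GH" using fF fG fH by (auto simp: FG_def GH_def)
  have hF: "{w. f w \<noteq> 0} \<subseteq> F" and hH: "{w. h w \<noteq> 0} \<subseteq> Hs" by (auto simp: F_def Hs_def)
  have sFG: "{w. conv f g w \<noteq> 0} \<subseteq> FG" unfolding F_def G_def FG_def by (rule conv_supp)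
  have sGH: "{w. conv g h w \<noteq> 0} \<subseteq> GH" unfolding G_def Hs_def GH_def by (rule conv_supp)
  have "conv (conv f g) h w = (\<Sum>x\<in>FG. conv f g x * (\<Sum>c\<in>Hs. if x @ c = w then h c else 0))"
    unfolding conv_pairs[OF fFG fH sFG hH]
    by (intro sum.cong refl) (simp add: sum_distrib_left times_if_zero)
  also have "\<dots> = (\<Sum>a\<in>F. \<Sum>b\<in>G. f a * g b * (\<Sum>c\<in>Hs. if a @ b @ c = w then h c else 0))"
    by (subst conv_weights[OF fF fG _ _ fFG]) (auto simp: F_def G_def FG_def)
  also have "\<dots> = (\<Sum>a\<in>F. \<Sum>b\<in>G. \<Sum>c\<in>Hs. if a @ b @ c = w then f a * g b * h c else 0)"
    by (simp add: sum_distrib_left times_if_zero)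
  finally have L: "conv (conv f g) h w = \<dots>" .
  have "conv f (conv g h) w = (\<Sum>a\<in>F. f a * (\<Sum>y\<in>GH. conv g h y * (if a @ y = w then 1 else 0)))"
    unfolding conv_pairs[OF fF fGH hF sGH]
    by (intro sum.cong refl) (simp add: sum_distrib_left times_if_zero times_if_one mult.assoc, intro sum.cong, auto)
  also have "\<dots> = (\<Sum>a\<in>F. f a * (\<Sum>b\<in>G. \<Sum>c\<in>Hs. g b * h c * (if a @ b @ c = w then 1 else 0)))"
    by (subst conv_weights[OF fG fH _ _ fGH]) (auto simp: G_def Hs_def GH_def)
  also have "\<dots> = (\<Sum>a\<in>F. \<Sum>b\<in>G. \<Sum>c\<in>Hs. if a @ b @ c = w then f a * g b * h c else 0)"
    by (simp add: sum_distrib_left times_if_zero times_if_one mult.assoc cong: if_cong)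
  finally show "conv (conv f g) h w = conv f (conv g h) w" using L by simp
qed

lemma conv_one_left: "conv (mono []) f = f"
proof
  fix w
  have "conv (mono []) f w = (\<Sum>i\<le>length w. if i = 0 then f w else 0)"
    unfolding conv_def by (intro sum.cong refl) (auto simp: mono_def)
  then show "conv (mono []) f w = f w" by simp
qed

lemma conv_one_right: "conv f (mono []) = f"
proof
  fix w
  have "conv f (mono []) w = (\<Sum>i\<le>length w. if i = length w then f w else 0)"
    unfolding conv_def by (intro sum.cong refl) (auto simp: mono_def)
  then show "conv f (mono []) w = f w" by simp
qed

lemma conv_distl: "conv (\<lambda>w. f w + g w) h = (\<lambda>w. conv f h w + conv g h w)"
  by (simp add: conv_def sum.distrib distrib_right)

lemma conv_distr: "conv h (\<lambda>w. f w + g w) = (\<lambda>w. conv h f w + conv h g w)"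
  by (simp add: conv_def sum.distrib distrib_left)

lemma mono_carrier: "set u \<subseteq> A \<Longrightarrow> mono u \<in> carrier (free_alg A)"
  by (simp add: fa_carrier mono_def)

lemma fa_add_closed:
  assumes "x \<in> carrier (free_alg A)" "y \<in> carrier (free_alg A)"
  shows "(\<lambda>w. x w + y w) \<in> carrier (free_alg A)"
  unfolding fa_carrier mem_Collect_eq
proof (intro conjI allI impI)
  fix w assume "x w + y w \<noteq> 0"
  then have "x w \<noteq> 0 \<or> y w \<noteq> 0" by auto
  then show "set w \<subseteq> A" using assms by (auto simp: fa_carrier)
next
  have "{w. x w + y w \<noteq> 0} \<subseteq> {w. x w \<noteq> 0} \<union> {w. y w \<noteq> 0}" by auto
  then show "finite {w. x w + y w \<noteq> 0}" using assms by (auto simp: fa_carrier elim: finite_subset)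
qed

lemma free_alg_ring: "ring (free_alg A :: ('g list \<Rightarrow> 'k::field) ring)"
proof (rule ringI)
  show "abelian_group (free_alg A :: ('g list \<Rightarrow> 'k) ring)"
  proof (rule abelian_groupI)
    fix x y :: "'g list \<Rightarrow> 'k" assume "x \<in> carrier (free_alg A)" "y \<in> carrier (free_alg A)"
    then show "x \<oplus>\<^bsub>free_alg A\<^esub> y \<in> carrier (free_alg A)"
      by (simp add: fa_add fa_add_closed)
  next
    show "\<zero>\<^bsub>free_alg A\<^esub> \<in> carrier (free_alg A)" by (simp add: fa_carrier fa_zero)
  next
    fix x :: "'g list \<Rightarrow> 'k" assume "x \<in> carrier (free_alg A)"
    then show "\<exists>y\<in>carrier (free_alg A). y \<oplus>\<^bsub>free_alg A\<^esub> x = \<zero>\<^bsub>free_alg A\<^esub>"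
      by (intro bexI[of _ "\<lambda>w. - x w"]) (auto simp: fa_carrier fa_add fa_zero)
  qed (simp_all add: fa_add fa_zero add_ac)
  show "monoid (free_alg A :: ('g list \<Rightarrow> 'k) ring)"
    by (rule monoidI) (simp_all add: fa_mult fa_one conv_closed conv_assoc conv_one_left conv_one_right mono_carrier)
qed (simp_all add: fa_mult fa_add conv_distl conv_distr)


lemma mono_mult: "conv (mono u) (mono v) = mono (u @ v)"
proof
  fix w
  have "conv (mono u) (mono v) w = (\<Sum>a\<in>{u}. \<Sum>b\<in>{v}. if a @ b = w then mono u a * mono v b else 0)"
    by (rule conv_pairs) (auto simp: mono_def)
  then show "conv (mono u) (mono v) w = mono (u @ v) w" by (auto simp: mono_def)
qed

definition scal :: "'k::field \<Rightarrow> 'g list \<Rightarrow> 'k" where "scal c = (\<lambda>w. if w = [] then c else 0)"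

lemma scal_carr: "scal c \<in> carrier (free_alg A)"
proof -
  have "{w. scal c w \<noteq> 0} \<subseteq> {[]}" by (auto simp: scal_def)
  then show ?thesis by (auto simp: fa_carrier scal_def elim: finite_subset)
qed

lemma conv_scal_left: "conv (scal c) f = (\<lambda>w. c * f w)"
proof
  fix w
  have "conv (scal c) f w = (\<Sum>i\<le>length w. if i = 0 then c * f w else 0)"
    unfolding conv_def by (intro sum.cong refl) (auto simp: scal_def)
  then show "conv (scal c) f w = c * f w" by simp
qed

lemma conv_scal_right: "conv f (scal c) = (\<lambda>w. c * f w)"
proof
  fix w
  have "conv f (scal c) w = (\<Sum>i\<le>length w. if i = length w then c * f w else 0)"
    unfolding conv_def by (intro sum.cong refl) (auto simp: scal_def mult.commute)
  then show "conv f (scal c) w = c * f w" by simp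
qed

lemma fa_minus: "f \<in> carrier (free_alg A) \<Longrightarrow> \<ominus>\<^bsub>free_alg A\<^esub> f = (\<lambda>w. - f w)"
proof -
  assume f: "f \<in> carrier (free_alg A)"
  interpret ring "free_alg A" by (rule free_alg_ring)
  have c: "(\<lambda>w. - f w) \<in> carrier (free_alg A)" using f by (auto simp: fa_carrier)
  show ?thesis by (rule minus_equality) (use f c in \<open>auto simp: fa_add fa_zero\<close>)
qed

lemma fa_sum_closed:
  assumes "finite S" "\<And>e. e \<in> S \<Longrightarrow> h e \<in> carrier (free_alg A)"
  shows "(\<lambda>w. \<Sum>e\<in>S. h e w) \<in> carrier (free_alg A)"
  using assms
proof (induction S rule: finite_induct)
  case empty then show ?case by (simp add: fa_carrier)
next
  case (insert x F) then show ?case by (simp add: fa_add_closed)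
qed

lemma fdiff_carr: "a \<in> carrier (free_alg A) \<Longrightarrow> b \<in> carrier (free_alg A) \<Longrightarrow> fdiff a b \<in> carrier (free_alg A)"
proof -
  assume a: "a \<in> carrier (free_alg A)" and b: "b \<in> carrier (free_alg A)"
  have "(\<lambda>w. - b w) \<in> carrier (free_alg A)" using b by (auto simp: fa_carrier)
  then have "(\<lambda>w. a w + - b w) \<in> carrier (free_alg A)" using fa_add_closed[OF a] by blast
  then show ?thesis by (simp add: fdiff_def)
qed

lemma zero_fun_carr: "(\<lambda>_. 0) \<in> carrier (free_alg A)" by (simp add: fa_carrier)

locale lpa =
  fixes V :: "'v set" and E :: "'e set" and r s :: "'e \<Rightarrow> 'v" and kt :: "'k::field_char_0 itself"
  assumes finV: "finite V" and rE: "r ` E \<subseteq> V" and sE: "s ` E \<subseteq> V"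
begin

abbreviation FA :: "(('v, 'e) lgen list \<Rightarrow> 'k) ring" where "FA \<equiv> free_alg (lgens V E)"
abbreviation J :: "(('v, 'e) lgen list \<Rightarrow> 'k) set" where "J \<equiv> genideal FA (lpa_rels V E r s)"
abbreviation L :: "(('v, 'e) lgen list \<Rightarrow> 'k) set ring" where "L \<equiv> leavitt V E r s"
definition pi :: "(('v, 'e) lgen list \<Rightarrow> 'k) \<Rightarrow> (('v, 'e) lgen list \<Rightarrow> 'k) set" where
  "pi f = J +>\<^bsub>FA\<^esub> f"

lemma ringFA: "ring FA" by (rule free_alg_ring)

lemma rels_carr: "lpa_rels V E r s \<subseteq> carrier FA"
proof -
  have m: "\<And>u. set u \<subseteq> lgens V E \<Longrightarrow> mono u \<in> carrier FA" by (rule mono_carrier)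
  have vx: "v \<in> V \<Longrightarrow> Vx v \<in> lgens V E" for v by (simp add: lgens_def)
  have ed: "e \<in> E \<Longrightarrow> Ed e \<in> lgens V E" for e by (simp add: lgens_def)
  have gh: "e \<in> E \<Longrightarrow> Gh e \<in> lgens V E" for e by (simp add: lgens_def)
  have rv: "e \<in> E \<Longrightarrow> r e \<in> V" and sv: "e \<in> E \<Longrightarrow> s e \<in> V" for e using rE sE by auto
  show ?thesis
    unfolding lpa_rels_def
    by (auto intro!: fdiff_carr m fa_sum_closed zero_fun_carr simp: vx ed gh rv sv finV)
qed

lemma idealJ: "ideal J FA" by (rule ring.genideal_ideal[OF ringFA rels_carr])

lemma L_eq: "L = FA Quot J" by (simp add: leavitt_def)

lemma ringL: "ring L" unfolding L_eq by (rule ideal.quotient_is_ring[OF idealJ])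

lemma pi_hom: "pi \<in> ring_hom FA L"
  unfolding L_eq pi_def[abs_def] by (rule ideal.rcos_ring_hom[OF idealJ])

lemma carrL: "carrier L = pi ` carrier FA"
  unfolding L_eq by (auto simp: FactRing_def A_RCOSETS_def' pi_def)

lemma zeroL: "\<zero>\<^bsub>L\<^esub> = J" unfolding L_eq by (simp add: FactRing_def)

lemma pi_zero_iff: "f \<in> carrier FA \<Longrightarrow> pi f = \<zero>\<^bsub>L\<^esub> \<longleftrightarrow> f \<in> J"
  unfolding zeroL pi_def
  using ring.a_rcos_zero[OF ringFA idealJ] ideal.rcos_const_imp_mem[OF idealJ] by auto

lemma pi_carr: "f \<in> carrier FA \<Longrightarrow> pi f \<in> carrier L"
  using pi_hom by (rule ring_hom_closed)

lemma pi_mult: "f \<in> carrier FA \<Longrightarrow> g \<in> carrier FA \<Longrightarrow> pi (conv f g) = pi f \<otimes>\<^bsub>L\<^esub> pi g"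
  using ring_hom_mult[OF pi_hom] by (simp add: fa_mult)

lemma pi_add: "f \<in> carrier FA \<Longrightarrow> g \<in> carrier FA \<Longrightarrow> pi (\<lambda>w. f w + g w) = pi f \<oplus>\<^bsub>L\<^esub> pi g"
  using ring_hom_add[OF pi_hom] by (simp add: fa_add)

lemma pi_one: "pi (mono []) = \<one>\<^bsub>L\<^esub>"
  using ring_hom_one[OF pi_hom] by (simp add: fa_one)

lemma pi_zero: "pi (\<lambda>_. 0) = \<zero>\<^bsub>L\<^esub>"
proof -
  have "(\<lambda>_. 0) \<in> J" using ideal.Icarr idealJ additive_subgroup.zero_closed[OF ideal.axioms(1)[OF idealJ]]
    by (simp add: fa_zero)
  then show ?thesis using pi_zero_iff zero_fun_carr by blast
qed

lemma rel_eq: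
  assumes a: "a \<in> carrier FA" and b: "b \<in> carrier FA" and J: "fdiff a b \<in> J"
  shows "pi a = pi b"
proof -
  have d: "fdiff a b \<in> carrier FA" using fdiff_carr[OF a b] .
  have "a = (\<lambda>w. fdiff a b w + b w)" by (simp add: fdiff_def)
  then have "pi a = pi (fdiff a b) \<oplus>\<^bsub>L\<^esub> pi b" using pi_add[OF d b] by simp
  also have "\<dots> = \<zero>\<^bsub>L\<^esub> \<oplus>\<^bsub>L\<^esub> pi b" using pi_zero_iff[OF d] J by simp
  also have "\<dots> = pi b" using ring.ring_simprules(8)[OF ringL pi_carr[OF b]] by simp
  finally show ?thesis .
qed

lemma rel_in_J: "x \<in> lpa_rels V E r s \<Longrightarrow> x \<in> J"
  using ring.genideal_self[OF ringFA rels_carr] by blast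

definition Gv where "Gv v = pi (mono [Vx v])"
definition Ge where "Ge e = pi (mono [Ed e])"
definition Gg where "Gg e = pi (mono [Gh e])"

lemma gens: "v \<in> V \<Longrightarrow> Vx v \<in> lgens V E" "e \<in> E \<Longrightarrow> Ed e \<in> lgens V E" "e \<in> E \<Longrightarrow> Gh e \<in> lgens V E"
  by (auto simp: lgens_def)

lemma rv: "e \<in> E \<Longrightarrow> r e \<in> V" and sv: "e \<in> E \<Longrightarrow> s e \<in> V" using rE sE by auto

lemma mono1_carr: "a \<in> lgens V E \<Longrightarrow> mono [a] \<in> carrier FA" by (simp add: mono_carrier)

lemma pi2: "a \<in> lgens V E \<Longrightarrow> b \<in> lgens V E \<Longrightarrow> pi (mono [a, b]) = pi (mono [a]) \<otimes>\<^bsub>L\<^esub> pi (mono [b])"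
proof -
  assume "a \<in> lgens V E" "b \<in> lgens V E"
  moreover have "(conv (mono [a]) (mono [b]) :: (('v, 'e) lgen list \<Rightarrow> 'k)) = mono [a, b]" by (simp add: mono_mult)
  ultimately show ?thesis using pi_mult[of "mono [a]" "mono [b]"] mono1_carr by metis
qed

lemma Gv_carr: "v \<in> V \<Longrightarrow> Gv v \<in> carrier L" and Ge_carr: "e \<in> E \<Longrightarrow> Ge e \<in> carrier L"
  and Gg_carr: "e \<in> E \<Longrightarrow> Gg e \<in> carrier L"
  by (auto simp: Gv_def Ge_def Gg_def intro!: pi_carr mono1_carr gens)

lemma R1: assumes "v \<in> V" "v' \<in> V" shows "Gv v \<otimes>\<^bsub>L\<^esub> Gv v' = (if v = v' then Gv v else \<zero>\<^bsub>L\<^esub>)"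
proof -
  have "fdiff (mono [Vx v, Vx v']) (if v = v' then mono [Vx v] else (\<lambda>_. 0)) \<in> lpa_rels V E r s"
    using assms unfolding lpa_rels_def by blast
  then have "pi (mono [Vx v, Vx v']) = pi (if v = v' then mono [Vx v] else (\<lambda>_. 0))"
    using assms by (intro rel_eq rel_in_J) (auto simp: mono_carrier gens zero_fun_carr)
  then show ?thesis using assms by (auto simp: Gv_def pi2 gens pi_zero)
qed

lemma R2: assumes "e \<in> E" shows "Gv (s e) \<otimes>\<^bsub>L\<^esub> Ge e = Ge e"
proof -
  have "fdiff (mono [Vx (s e), Ed e]) (mono [Ed e]) \<in> lpa_rels V E r s"
    using assms unfolding lpa_rels_def by blast
  then have "pi (mono [Vx (s e), Ed e]) = pi (mono [Ed e])"
    using assms by (intro rel_eq rel_in_J) (auto simp: mono_carrier gens sv)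
  then show ?thesis using assms by (auto simp: Gv_def Ge_def pi2 gens sv)
qed

lemma R3: assumes "e \<in> E" shows "Ge e \<otimes>\<^bsub>L\<^esub> Gv (r e) = Ge e"
proof -
  have "fdiff (mono [Ed e, Vx (r e)]) (mono [Ed e]) \<in> lpa_rels V E r s"
    using assms unfolding lpa_rels_def by blast
  then have "pi (mono [Ed e, Vx (r e)]) = pi (mono [Ed e])"
    using assms by (intro rel_eq rel_in_J) (auto simp: mono_carrier gens rv)
  then show ?thesis using assms by (auto simp: Gv_def Ge_def pi2 gens rv)
qed

lemma R4: assumes "e \<in> E" shows "Gv (r e) \<otimes>\<^bsub>L\<^esub> Gg e = Gg e"
proof -
  have "fdiff (mono [Vx (r e), Gh e]) (mono [Gh e]) \<in> lpa_rels V E r s"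
    using assms unfolding lpa_rels_def by blast
  then have "pi (mono [Vx (r e), Gh e]) = pi (mono [Gh e])"
    using assms by (intro rel_eq rel_in_J) (auto simp: mono_carrier gens rv)
  then show ?thesis using assms by (auto simp: Gv_def Gg_def pi2 gens rv)
qed

lemma R5: assumes "e \<in> E" shows "Gg e \<otimes>\<^bsub>L\<^esub> Gv (s e) = Gg e"
proof -
  have "fdiff (mono [Gh e, Vx (s e)]) (mono [Gh e]) \<in> lpa_rels V E r s"
    using assms unfolding lpa_rels_def by blast
  then have "pi (mono [Gh e, Vx (s e)]) = pi (mono [Gh e])"
    using assms by (intro rel_eq rel_in_J) (auto simp: mono_carrier gens sv)
  then show ?thesis using assms by (auto simp: Gv_def Gg_def pi2 gens sv)
qed

lemma R6: assumes "e \<in> E" "f \<in> E" shows "Gg e \<otimes>\<^bsub>L\<^esub> Ge f = (if e = f then Gv (r e) else \<zero>\<^bsub>L\<^esub>)"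
proof -
  have "fdiff (mono [Gh e, Ed f]) (if e = f then mono [Vx (r e)] else (\<lambda>_. 0)) \<in> lpa_rels V E r s"
    using assms unfolding lpa_rels_def by blast
  then have "pi (mono [Gh e, Ed f]) = pi (if e = f then mono [Vx (r e)] else (\<lambda>_. 0))"
    using assms by (intro rel_eq rel_in_J) (auto simp: mono_carrier gens zero_fun_carr rv)
  then show ?thesis using assms by (auto simp: Gv_def Ge_def Gg_def pi2 gens pi_zero)
qed

lemma CK1:
  assumes "e0 \<in> E" "{e \<in> E. s e = s e0} = {e0}"
  shows "Gv (s e0) = Ge e0 \<otimes>\<^bsub>L\<^esub> Gg e0"
proof -
  have "fdiff (mono [Vx (s e0)]) (\<lambda>w. \<Sum>e\<in>{e \<in> E. s e = s e0}. mono [Ed e, Gh e] w) \<in>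
     {fdiff (mono [Vx v]) (\<lambda>w. \<Sum>e\<in>{e\<in>E. s e = v}. mono [Ed e, Gh e] w) | v.
        v \<in> V \<and> finite {e\<in>E. s e = v} \<and> {e\<in>E. s e = v} \<noteq> {}}"
    apply (rule CollectI, rule exI[of _ "s e0"])
    using assms sv by auto
  then have "fdiff (mono [Vx (s e0)]) (\<lambda>w. \<Sum>e\<in>{e \<in> E. s e = s e0}. mono [Ed e, Gh e] w) \<in> (lpa_rels V E r s :: (('v, 'e) lgen list \<Rightarrow> 'k) set)"
    unfolding lpa_rels_def by (rule UnI1[OF UnI2])
  moreover have "((\<lambda>w. \<Sum>e\<in>{e \<in> E. s e = s e0}. mono [Ed e, Gh e] w) :: (('v, 'e) lgen list \<Rightarrow> 'k)) = mono [Ed e0, Gh e0]"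
    using assms(2) by simp
  ultimately have "fdiff (mono [Vx (s e0)]) (mono [Ed e0, Gh e0]) \<in> (lpa_rels V E r s :: (('v, 'e) lgen list \<Rightarrow> 'k) set)" by simp
  then have "pi (mono [Vx (s e0)]) = pi (mono [Ed e0, Gh e0])"
    using assms by (intro rel_eq rel_in_J) (auto simp: mono_carrier gens sv)
  then show ?thesis using assms by (auto simp: Gv_def Ge_def Gg_def pi2 gens)
qed

definition sc :: "'k \<Rightarrow> (('v, 'e) lgen list \<Rightarrow> 'k) set" where "sc c = pi (scal c)"

lemma sc_carr: "sc c \<in> carrier L" by (simp add: sc_def pi_carr scal_carr)

lemma sc_add: "sc (c + d) = sc c \<oplus>\<^bsub>L\<^esub> sc d"
proof -
  have "(scal (c + d) :: (('v, 'e) lgen list \<Rightarrow> 'k)) = (\<lambda>w. scal c w + scal d w)" by (auto simp: scal_def)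
  then have "sc (c + d) = pi (\<lambda>w. scal c w + scal d w)" by (simp add: sc_def)
  then show ?thesis using pi_add[OF scal_carr scal_carr] by (simp add: sc_def)
qed

lemma sc_mult: "sc (c * d) = sc c \<otimes>\<^bsub>L\<^esub> sc d"
proof -
  have "(scal (c * d) :: (('v, 'e) lgen list \<Rightarrow> 'k)) = conv (scal c) (scal d)" unfolding conv_scal_left by (auto simp: scal_def)
  then show ?thesis by (simp add: sc_def pi_mult scal_carr)
qed

lemma sc_one: "sc 1 = \<one>\<^bsub>L\<^esub>"
proof -
  have "(scal 1 :: (('v, 'e) lgen list \<Rightarrow> 'k)) = mono []" by (auto simp: scal_def mono_def)
  then show ?thesis unfolding sc_def using pi_one by metis
qed

lemma sc_comm: "x \<in> carrier L \<Longrightarrow> sc c \<otimes>\<^bsub>L\<^esub> x = x \<otimes>\<^bsub>L\<^esub> sc c"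
proof -
  assume "x \<in> carrier L"
  then obtain f where f: "f \<in> carrier FA" "x = pi f" using carrL by auto
  have "sc c \<otimes>\<^bsub>L\<^esub> x = pi (conv (scal c) f)" using f by (simp add: sc_def pi_mult scal_carr)
  also have "\<dots> = pi (conv f (scal c))" by (simp add: conv_scal_left conv_scal_right)
  also have "\<dots> = x \<otimes>\<^bsub>L\<^esub> sc c" using f by (simp add: sc_def pi_mult scal_carr)
  finally show ?thesis .
qed

lemma gen_induct:
  assumes S: "S \<subseteq> carrier L" "\<zero>\<^bsub>L\<^esub> \<in> S"
    and add: "\<And>x y. x \<in> S \<Longrightarrow> y \<in> S \<Longrightarrow> x \<oplus>\<^bsub>L\<^esub> y \<in> S"
    and mul: "\<And>x y. x \<in> S \<Longrightarrow> y \<in> S \<Longrightarrow> x \<otimes>\<^bsub>L\<^esub> y \<in> S"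
    and scS: "\<And>c. sc c \<in> S"
    and genS: "\<And>a. a \<in> lgens V E \<Longrightarrow> pi (mono [a]) \<in> S"
    and f: "f \<in> carrier FA"
  shows "pi f \<in> S"
proof -
  have monoS: "set w \<subseteq> lgens V E \<Longrightarrow> pi (mono w) \<in> S" for w
  proof (induction w)
    case Nil then show ?case using scS[of 1] by (simp add: sc_one pi_one)
  next
    case (Cons a w)
    have "(mono (a # w) :: (('v, 'e) lgen list \<Rightarrow> 'k)) = conv (mono [a]) (mono w)" by (simp add: mono_mult)
    then have "pi (mono (a # w)) = pi (mono [a]) \<otimes>\<^bsub>L\<^esub> pi (mono w)"
      using Cons.prems by (simp add: pi_mult mono_carrier)
    then show ?case using Cons mul genS by simp
  qed
  define F where "F = {w. f w \<noteq> 0}"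
  have fin: "finite F" using f by (simp add: F_def fa_carrier)
  have key: "finite T \<Longrightarrow> T \<subseteq> F \<Longrightarrow> (\<lambda>u. if u \<in> T then f u else 0) \<in> carrier FA \<and> pi (\<lambda>u. if u \<in> T then f u else 0) \<in> S"
    for T
  proof (induction T rule: finite_induct)
    case empty then show ?case using S(2) by (simp add: pi_zero zero_fun_carr)
  next
    case (insert w T)
    have wA: "set w \<subseteq> lgens V E" using insert f by (auto simp: F_def fa_carrier)
    have c1: "(\<lambda>u. if u \<in> T then f u else 0) \<in> carrier FA" and s1: "pi (\<lambda>u. if u \<in> T then f u else 0) \<in> S"
      using insert by auto
    have eq: "(\<lambda>u. if u \<in> insert w T then f u else 0) = (\<lambda>u. (if u \<in> T then f u else 0) + conv (scal (f w)) (mono w) u)"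
      using insert(2) by (auto simp: conv_scal_left mono_def)
    have c2: "conv (scal (f w)) (mono w) \<in> carrier FA" by (simp add: conv_closed scal_carr mono_carrier wA)
    have s2: "pi (conv (scal (f w)) (mono w)) \<in> S"
      using mul[OF scS monoS[OF wA]] by (simp add: pi_mult scal_carr mono_carrier wA sc_def)
    show ?case unfolding eq using fa_add_closed[OF c1 c2] pi_add[OF c1 c2] add[OF s1 s2] by simp
  qed
  have "(\<lambda>u. if u \<in> F then f u else 0) \<in> carrier FA \<and> pi (\<lambda>u. if u \<in> F then f u else 0) \<in> S"
    by (rule key[OF fin order_refl])
  moreover have "(\<lambda>u. if u \<in> F then f u else 0) = f" by (auto simp: F_def)
  ultimately show ?thesis by simp
qed

end


context lpa
begin

definition stopv :: "'v \<Rightarrow> bool" where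
  "stopv u \<longleftrightarrow> \<not> (finite {e \<in> E. s e = u} \<and> {e \<in> E. s e = u} \<noteq> {})"

definition valid :: "'v \<times> (nat \<Rightarrow> 'e option) \<Rightarrow> bool" where
  "valid x \<longleftrightarrow> fst x \<in> V \<and> (\<forall>i. snd x i = None \<longrightarrow> snd x (Suc i) = None)
     \<and> (case snd x 0 of None \<Rightarrow> stopv (fst x) | Some e \<Rightarrow> e \<in> E \<and> s e = fst x)
     \<and> (\<forall>i e. snd x i = Some e \<longrightarrow> (case snd x (Suc i) of None \<Rightarrow> stopv (r e) | Some f \<Rightarrow> f \<in> E \<and> s f = r e))"

primrec tau :: "('v, 'e) lgen \<Rightarrow> 'v \<times> (nat \<Rightarrow> 'e option) \<Rightarrow> ('v \<times> (nat \<Rightarrow> 'e option)) option" where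
  "tau (Vx u) x = (if fst x = u then Some x else None)"
| "tau (Ed e) x = (if snd x 0 = Some e then Some (r e, \<lambda>i. snd x (Suc i)) else None)"
| "tau (Gh e) x = (if fst x = r e \<and> e \<in> E then Some (s e, case_nat (Some e) (snd x)) else None)"

primrec tauw :: "('v, 'e) lgen list \<Rightarrow> 'v \<times> (nat \<Rightarrow> 'e option) \<Rightarrow> ('v \<times> (nat \<Rightarrow> 'e option)) option" where
  "tauw [] x = Some x"
| "tauw (g # w) x = (case tau g x of None \<Rightarrow> None | Some y \<Rightarrow> tauw w y)"

definition rho :: "('v, 'e) lgen list \<Rightarrow> ('v \<times> (nat \<Rightarrow> 'e option) \<Rightarrow> 'k) \<Rightarrow> 'v \<times> (nat \<Rightarrow> 'e option) \<Rightarrow> 'k" where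
  "rho w \<phi> x = (case tauw w x of None \<Rightarrow> 0 | Some y \<Rightarrow> \<phi> y)"

definition Phi :: "(('v, 'e) lgen list \<Rightarrow> 'k) \<Rightarrow> ('v \<times> (nat \<Rightarrow> 'e option) \<Rightarrow> 'k) \<Rightarrow> 'v \<times> (nat \<Rightarrow> 'e option) \<Rightarrow> 'k" where
  "Phi f \<phi> x = (\<Sum>w\<in>{w. f w \<noteq> 0}. f w * rho w \<phi> x)"

lemma valid_tau: assumes "valid x" "tau g x = Some y" shows "valid y"
proof (cases g)
  case (Vx u) then show ?thesis using assms by (auto split: if_splits)
next
  case (Ed e)
  obtain v p where x: "x = (v, p)" by (cases x)
  have p0: "p 0 = Some e" and y: "y = (r e, \<lambda>i. p (Suc i))" using assms Ed x by (auto split: if_splits)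
  have A: "\<forall>i. p i = None \<longrightarrow> p (Suc i) = None"
    and B: "case p 0 of None \<Rightarrow> stopv v | Some e \<Rightarrow> e \<in> E \<and> s e = v"
    and C: "\<forall>i e. p i = Some e \<longrightarrow> (case p (Suc i) of None \<Rightarrow> stopv (r e) | Some f \<Rightarrow> f \<in> E \<and> s f = r e)"
    using assms(1) unfolding x valid_def fst_conv snd_conv by auto
  have eE: "e \<in> E" using B p0 by simp
  have B': "case p (Suc 0) of None \<Rightarrow> stopv (r e) | Some f \<Rightarrow> f \<in> E \<and> s f = r e"
    using C p0 by blast
  have C': "\<forall>i e. p (Suc i) = Some e \<longrightarrow> (case p (Suc (Suc i)) of None \<Rightarrow> stopv (r e) | Some f \<Rightarrow> f \<in> E \<and> s f = r e)"
    using C by blast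
  show ?thesis unfolding y valid_def fst_conv snd_conv using rv[OF eE] A B' C' by simp
next
  case (Gh e)
  obtain v p where x: "x = (v, p)" by (cases x)
  have ve: "v = r e" "e \<in> E" and y: "y = (s e, case_nat (Some e) p)" using assms Gh x by (auto split: if_splits)
  have A: "\<forall>i. p i = None \<longrightarrow> p (Suc i) = None"
    and B: "case p 0 of None \<Rightarrow> stopv v | Some e \<Rightarrow> e \<in> E \<and> s e = v"
    and C: "\<forall>i e. p i = Some e \<longrightarrow> (case p (Suc i) of None \<Rightarrow> stopv (r e) | Some f \<Rightarrow> f \<in> E \<and> s f = r e)"
    using assms(1) unfolding x valid_def fst_conv snd_conv by auto
  have C': "case_nat (Some e) p i = Some e' \<Longrightarrow> (case case_nat (Some e) p (Suc i) of None \<Rightarrow> stopv (r e') | Some f \<Rightarrow> f \<in> E \<and> s f = r e')" for i e'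
  proof (cases i)
    case 0
    assume "case_nat (Some e) p i = Some e'"
    then have "e' = e" using 0 by simp
    then show ?thesis using B ve 0 by (auto split: option.splits)
  next
    case (Suc j)
    assume "case_nat (Some e) p i = Some e'"
    then show ?thesis using C Suc by auto
  qed
  show ?thesis unfolding y valid_def fst_conv snd_conv using sv[OF ve(2)] ve A C'
    by (auto split: nat.splits)
qed

lemma valid_tauw: "valid x \<Longrightarrow> tauw w x = Some y \<Longrightarrow> valid y"
proof (induction w arbitrary: x)
  case Nil then show ?case by simp
next
  case (Cons g w)
  then obtain z where "tau g x = Some z" "tauw w z = Some y" by (auto split: option.splits)
  then show ?case using Cons valid_tau by blast
qed

lemma tauw_append: "tauw (a @ b) x = (case tauw a x of None \<Rightarrow> None | Some y \<Rightarrow> tauw b y)"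
  by (induction a arbitrary: x) (auto split: option.splits)

lemma rho_append: "rho (a @ b) \<phi> x = rho a (rho b \<phi>) x"
  by (auto simp: rho_def tauw_append split: option.splits)

lemma rho_lin: "finite G \<Longrightarrow> rho a (\<lambda>y. \<Sum>b\<in>G. g b * \<psi> b y) x = (\<Sum>b\<in>G. g b * rho a (\<psi> b) x)"
  by (auto simp: rho_def split: option.splits)

lemma Phi_super:
  assumes "finite W" "{w. f w \<noteq> 0} \<subseteq> W"
  shows "Phi f \<phi> x = (\<Sum>w\<in>W. f w * rho w \<phi> x)"
  unfolding Phi_def by (rule sum.mono_neutral_left) (use assms in auto)

lemma Phi_mult:
  assumes f: "f \<in> carrier FA" and g: "g \<in> carrier FA"
  shows "Phi (conv f g) \<phi> x = Phi f (Phi g \<phi>) x"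
proof -
  define F where "F = {w. f w \<noteq> 0}"
  define G where "G = {w. g w \<noteq> 0}"
  define FG where "FG = (\<lambda>p. fst p @ snd p) ` (F \<times> G)"
  have fF: "finite F" and fG: "finite G" using f g by (auto simp: fa_carrier F_def G_def)
  have fFG: "finite FG" using fF fG by (simp add: FG_def)
  have "Phi (conv f g) \<phi> x = (\<Sum>w\<in>FG. conv f g w * rho w \<phi> x)"
    by (rule Phi_super[OF fFG]) (unfold FG_def F_def G_def, rule conv_supp)
  also have "\<dots> = (\<Sum>a\<in>F. \<Sum>b\<in>G. f a * g b * rho (a @ b) \<phi> x)"
    by (rule conv_weights[OF fF fG _ _ fFG]) (auto simp: F_def G_def FG_def)
  also have "\<dots> = (\<Sum>a\<in>F. f a * rho a (\<lambda>y. \<Sum>b\<in>G. g b * rho b \<phi> y) x)"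
    by (simp add: rho_lin[OF fG] rho_append sum_distrib_left mult.assoc)
  also have "\<dots> = Phi f (Phi g \<phi>) x"
    by (simp add: Phi_def[abs_def] F_def G_def)
  finally show ?thesis .
qed

lemma Phi_add:
  assumes f: "f \<in> carrier FA" and g: "g \<in> carrier FA"
  shows "Phi (\<lambda>w. f w + g w) \<phi> x = Phi f \<phi> x + Phi g \<phi> x"
proof -
  define W where "W = {w. f w \<noteq> 0} \<union> {w. g w \<noteq> 0}"
  have fW: "finite W" using f g by (auto simp: fa_carrier W_def)
  have "Phi (\<lambda>w. f w + g w) \<phi> x = (\<Sum>w\<in>W. (f w + g w) * rho w \<phi> x)"
    by (rule Phi_super[OF fW]) (auto simp: W_def)
  also have "\<dots> = (\<Sum>w\<in>W. f w * rho w \<phi> x) + (\<Sum>w\<in>W. g w * rho w \<phi> x)"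
    by (simp add: distrib_right sum.distrib)
  also have "\<dots> = Phi f \<phi> x + Phi g \<phi> x"
    using Phi_super[OF fW, of f] Phi_super[OF fW, of g] by (auto simp: W_def)
  finally show ?thesis .
qed

lemma Phi_neg: "Phi (\<lambda>w. - f w) \<phi> x = - Phi f \<phi> x"
  by (simp add: Phi_def sum_negf)

lemma Phi_zero: "Phi (\<lambda>_. 0) \<phi> x = 0"
  by (simp add: Phi_def)

lemma Phi_mono: "Phi (mono u) \<phi> x = rho u \<phi> x"
proof -
  have "Phi (mono u) \<phi> x = (\<Sum>w\<in>{u}. mono u w * rho w \<phi> x)"
    by (rule Phi_super) (auto simp: mono_def)
  then show ?thesis by (simp add: mono_def)
qed

lemma Phi_fdiff:
  assumes "a \<in> carrier FA" "b \<in> carrier FA"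
  shows "Phi (fdiff a b) \<phi> x = Phi a \<phi> x - Phi b \<phi> x"
proof -
  have nb: "(\<lambda>w. - b w) \<in> carrier FA" using assms(2) by (auto simp: fa_carrier)
  have "fdiff a b = (\<lambda>w. a w + - b w)" by (simp add: fdiff_def)
  then show ?thesis using Phi_add[OF assms(1) nb] Phi_neg by simp
qed

lemma Phi_sum:
  assumes "finite S" "\<And>e. e \<in> S \<Longrightarrow> h e \<in> carrier FA"
  shows "Phi (\<lambda>w. \<Sum>e\<in>S. h e w) \<phi> x = (\<Sum>e\<in>S. Phi (h e) \<phi> x)"
  using assms
proof (induction S rule: finite_induct)
  case empty then show ?case by (simp add: Phi_zero)
next
  case (insert a F)
  have c: "(\<lambda>w. \<Sum>e\<in>F. h e w) \<in> carrier FA" using insert by (intro fa_sum_closed) auto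
  have "Phi (\<lambda>w. \<Sum>e\<in>insert a F. h e w) \<phi> x = Phi (\<lambda>w. h a w + (\<Sum>e\<in>F. h e w)) \<phi> x"
    using insert by simp
  also have "\<dots> = Phi (h a) \<phi> x + Phi (\<lambda>w. \<Sum>e\<in>F. h e w) \<phi> x"
    using Phi_add[OF _ c, of "h a"] insert by simp
  finally show ?case using insert by simp
qed

lemma Phi_valid_zero:
  assumes "\<And>z. valid z \<Longrightarrow> \<psi> z = 0" "valid y"
  shows "Phi f \<psi> y = 0"
proof -
  have "rho w \<psi> y = 0" for w
    using assms valid_tauw[OF assms(2), of w] by (auto simp: rho_def split: option.splits)
  then show ?thesis by (simp add: Phi_def)
qed

end


context lpa
begin

definition II :: "(('v, 'e) lgen list \<Rightarrow> 'k) set" where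
  "II = {f \<in> carrier FA. \<forall>\<phi> x. valid x \<longrightarrow> Phi f \<phi> x = 0}"

lemma ideal_II: "ideal II FA"
proof (rule idealI[OF ringFA])
  interpret R: ring FA by (rule ringFA)
  show "subgroup II (add_monoid FA)"
  proof (rule R.add.subgroupI)
    show "II \<subseteq> carrier FA" by (auto simp: II_def)
    have "(\<lambda>_. 0) \<in> II" by (auto simp: II_def zero_fun_carr Phi_zero)
    then show "II \<noteq> {}" by auto
  next
    fix a assume a: "a \<in> II"
    then have "\<ominus>\<^bsub>FA\<^esub> a = (\<lambda>w. - a w)"
      using fa_minus[of a] by (simp add: II_def)
    moreover have "(\<lambda>w. - a w) \<in> carrier FA" using a by (auto simp: II_def fa_carrier)
    ultimately show "\<ominus>\<^bsub>FA\<^esub> a \<in> II" using a by (auto simp: II_def Phi_neg)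
  next
    fix a b assume a: "a \<in> II" and b: "b \<in> II"
    then show "a \<oplus>\<^bsub>FA\<^esub> b \<in> II"
      by (auto simp: II_def fa_add fa_add_closed Phi_add)
  qed
next
  fix a x assume a: "a \<in> II" and x: "x \<in> carrier FA"
  have "Phi (conv x a) \<phi> y = 0" if "valid y" for \<phi> y
    using Phi_mult[of x a] a x that Phi_valid_zero[of "Phi a \<phi>" y x] by (auto simp: II_def)
  then show "x \<otimes>\<^bsub>FA\<^esub> a \<in> II" using a x by (auto simp: II_def fa_mult conv_closed)
next
  fix a x assume a: "a \<in> II" and x: "x \<in> carrier FA"
  have "Phi (conv a x) \<phi> y = 0" if "valid y" for \<phi> y
  proof -
    have "Phi (conv a x) \<phi> y = Phi a (Phi x \<phi>) y" using a x by (intro Phi_mult) (auto simp: II_def)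
    also have "\<dots> = 0" using a that unfolding II_def by blast
    finally show ?thesis .
  qed
  then show "a \<otimes>\<^bsub>FA\<^esub> x \<in> II" using a x by (auto simp: II_def fa_mult conv_closed)
qed

lemma rho_simps:
  "rho [Vx u] \<phi> x = (if fst x = u then \<phi> x else 0)"
  "rho [Vx u, Vx u'] \<phi> x = (if fst x = u \<and> fst x = u' then \<phi> x else 0)"
  "rho [] \<phi> x = \<phi> x"
  by (auto simp: rho_def)

lemma rels_II: "lpa_rels V E r s \<subseteq> II"
proof
  fix q :: "('v, 'e) lgen list \<Rightarrow> 'k" assume q: "q \<in> lpa_rels V E r s"
  then have qc: "q \<in> carrier FA" using rels_carr by auto
  have "Phi q \<phi> x = 0" if x: "valid x" for \<phi> x
  proof -
    obtain v p where xv: "x = (v, p)" by (cases x)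
    have vV: "v \<in> V" and A: "\<forall>i. p i = None \<longrightarrow> p (Suc i) = None"
      and B: "case p 0 of None \<Rightarrow> stopv v | Some e \<Rightarrow> e \<in> E \<and> s e = v"
      using x unfolding xv valid_def fst_conv snd_conv by auto
    have mc: "\<And>u. set u \<subseteq> lgens V E \<Longrightarrow> mono u \<in> carrier FA" by (rule mono_carrier)
    note gg = gens rv sv
    from q show ?thesis
      unfolding lpa_rels_def
    proof (elim UnE CollectE exE conjE singletonE)
      fix v1 v2 assume qq: "q = fdiff (mono [Vx v1, Vx v2]) (if v1 = v2 then mono [Vx v1] else (\<lambda>_. 0))"
        and "v1 \<in> V" "v2 \<in> V"
      then show ?thesis
        by (auto simp: Phi_fdiff mc gg zero_fun_carr Phi_mono Phi_zero rho_simps)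
    next
      fix e assume qq: "q = fdiff (mono [Vx (s e), Ed e]) (mono [Ed e])" and e: "e \<in> E"
      then show ?thesis using B xv
        by (auto simp: Phi_fdiff mc gg Phi_mono rho_def split: option.splits)
    next
      fix e assume qq: "q = fdiff (mono [Ed e, Vx (r e)]) (mono [Ed e])" and e: "e \<in> E"
      then show ?thesis
        by (auto simp: Phi_fdiff mc gg Phi_mono rho_def split: option.splits)
    next
      fix e assume qq: "q = fdiff (mono [Vx (r e), Gh e]) (mono [Gh e])" and e: "e \<in> E"
      then show ?thesis
        by (auto simp: Phi_fdiff mc gg Phi_mono rho_def split: option.splits)
    next
      fix e assume qq: "q = fdiff (mono [Gh e, Vx (s e)]) (mono [Gh e])" and e: "e \<in> E"
      then show ?thesis
        by (auto simp: Phi_fdiff mc gg Phi_mono rho_def split: option.splits)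
    next
      fix e f assume qq: "q = fdiff (mono [Gh e, Ed f]) (if e = f then mono [Vx (r e)] else (\<lambda>_. 0))"
        and e: "e \<in> E" "f \<in> E"
      then show ?thesis using xv
        by (auto simp: Phi_fdiff mc gg zero_fun_carr Phi_mono Phi_zero rho_def split: option.splits)
    next
      fix u assume qq: "q = fdiff (mono [Vx u]) (\<lambda>w. \<Sum>e\<in>{e\<in>E. s e = u}. mono [Ed e, Gh e] w)"
        and u: "u \<in> V" "finite {e\<in>E. s e = u}" "{e\<in>E. s e = u} \<noteq> {}"
      define S where "S = {e\<in>E. s e = u}"
      have mS: "\<And>e. e \<in> S \<Longrightarrow> mono [Ed e, Gh e] \<in> carrier FA" by (auto simp: S_def mc gg)
      have sc: "(\<lambda>w. \<Sum>e\<in>S. mono [Ed e, Gh e] w) \<in> carrier FA"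
        using u(2) mS by (intro fa_sum_closed) (auto simp: S_def)
      have r1: "rho [Ed e, Gh e] \<phi> x = (if p 0 = Some e then \<phi> x else 0)" if "e \<in> E" for e
      proof -
        have "case_nat (Some e) (\<lambda>i. p (Suc i)) = p" if "p 0 = Some e"
          using that by (auto split: nat.splits)
        then show ?thesis using that B xv by (auto simp: rho_def)
      qed
      have "Phi q \<phi> x = rho [Vx u] \<phi> x - (\<Sum>e\<in>S. rho [Ed e, Gh e] \<phi> x)"
        using qq Phi_fdiff[OF mc sc] Phi_sum[OF u(2)[folded S_def] mS] u
        by (simp add: gg S_def Phi_mono)
      also have "\<dots> = rho [Vx u] \<phi> x - (\<Sum>e\<in>S. if p 0 = Some e then \<phi> x else 0)"
        using r1 by (simp add: S_def)
      also have "\<dots> = 0"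
      proof (cases "p 0")
        case None
        then have "stopv v" using B by simp
        then have "v \<noteq> u" using u by (auto simp: stopv_def)
        then show ?thesis using None xv by (simp add: rho_simps)
      next
        case (Some e0)
        then have e0: "e0 \<in> E" "s e0 = v" using B by auto
        show ?thesis
        proof (cases "v = u")
          case True
          then have "e0 \<in> S" using e0 by (simp add: S_def)
          then have "(\<Sum>e\<in>S. if p 0 = Some e then \<phi> x else 0) = \<phi> x"
            using Some u(2) by (simp add: S_def sum.delta')
          then show ?thesis using True xv by (simp add: rho_simps)
        next
          case False
          then have "e0 \<notin> S" using e0 by (simp add: S_def)
          then have "(\<Sum>e\<in>S. if p 0 = Some e then \<phi> x else 0) = 0"
            using Some by (intro sum.neutral) auto
          then show ?thesis using False xv by (simp add: rho_simps)
        qed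
      qed
      finally show ?thesis .
    next
      assume qq: "q = fdiff (mono []) (\<lambda>w. \<Sum>v\<in>V. mono [Vx v] w)"
      have mV: "\<And>v. v \<in> V \<Longrightarrow> mono [Vx v] \<in> carrier FA" by (auto simp: mc gg)
      have sc: "(\<lambda>w. \<Sum>v\<in>V. mono [Vx v] w) \<in> carrier FA"
        using finV mV by (intro fa_sum_closed) auto
      have "Phi q \<phi> x = \<phi> x - (\<Sum>v'\<in>V. if fst x = v' then \<phi> x else 0)"
        using qq Phi_fdiff[OF mc sc] Phi_sum[OF finV mV]
        by (simp add: Phi_mono rho_simps)
      also have "\<dots> = 0" using vV finV xv by (simp add: sum.delta)
      finally show ?thesis .
    qed
  qed
  then show "q \<in> II" using qc by (auto simp: II_def)
qed

lemma J_II: "J \<subseteq> II"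
  by (rule ring.genideal_minimal[OF ringFA ideal_II rels_II])

definition nxt :: "'v \<Rightarrow> 'e option" where
  "nxt u = (if stopv u then None else Some (SOME e. e \<in> E \<and> s e = u))"

lemma nxt_Some: "nxt u = Some e \<Longrightarrow> e \<in> E \<and> s e = u"
proof -
  assume n: "nxt u = Some e"
  then have "\<not> stopv u" by (auto simp: nxt_def split: if_splits)
  then have "\<exists>e. e \<in> E \<and> s e = u" by (auto simp: stopv_def)
  then have "(SOME e. e \<in> E \<and> s e = u) \<in> E \<and> s (SOME e. e \<in> E \<and> s e = u) = u" by (rule someI_ex)
  then show ?thesis using n by (auto simp: nxt_def split: if_splits)
qed

lemma nxt_None: "nxt u = None \<longleftrightarrow> stopv u"
  by (simp add: nxt_def)

primrec vseq :: "'v \<Rightarrow> nat \<Rightarrow> 'v" where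
  "vseq w 0 = w"
| "vseq w (Suc i) = (case nxt (vseq w i) of None \<Rightarrow> vseq w i | Some e \<Rightarrow> r e)"

lemma valid_exists: "w \<in> V \<Longrightarrow> valid (w, \<lambda>i. nxt (vseq w i))"
  unfolding valid_def fst_conv snd_conv
proof (intro conjI allI impI)
  fix i assume "nxt (vseq w i) = None"
  then show "nxt (vseq w (Suc i)) = None" by simp
next
  show "case nxt (vseq w 0) of None \<Rightarrow> stopv w | Some e \<Rightarrow> e \<in> E \<and> s e = w"
    using nxt_Some nxt_None by (auto split: option.splits)
next
  fix i e assume n: "nxt (vseq w i) = Some e"
  then have "vseq w (Suc i) = r e" by simp
  then show "case nxt (vseq w (Suc i)) of None \<Rightarrow> stopv (r e) | Some f \<Rightarrow> f \<in> E \<and> s f = r e"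
    using nxt_Some nxt_None by (auto split: option.splits)
qed

lemma Gv_nz: assumes "w \<in> V" shows "Gv w \<noteq> \<zero>\<^bsub>L\<^esub>"
proof
  assume "Gv w = \<zero>\<^bsub>L\<^esub>"
  moreover have "mono [Vx w] \<in> carrier FA" using assms by (intro mono_carrier) (auto simp: gens)
  ultimately have "mono [Vx w] \<in> J" using pi_zero_iff by (auto simp: Gv_def)
  then have "mono [Vx w] \<in> II" using J_II by auto
  then have "Phi (mono [Vx w]) (\<lambda>_. 1) (w, \<lambda>i. nxt (vseq w i)) = 0"
    using valid_exists[OF assms] by (auto simp: II_def)
  then show False by (simp add: Phi_mono rho_simps)
qed

end


fun act :: "bool \<times> bool \<Rightarrow> int \<times> int \<Rightarrow> int \<times> int" where
  "act (True, True) (x, y) = (x + 2 * y, y)"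
| "act (True, False) (x, y) = (x - 2 * y, y)"
| "act (False, True) (x, y) = (x, y + 2 * x)"
| "act (False, False) (x, y) = (x, y - 2 * x)"

definition applyW :: "(bool \<times> bool) list \<Rightarrow> int \<times> int \<Rightarrow> int \<times> int" where
  "applyW ls v = foldr act ls v"

definition XX :: "(int \<times> int) set" where "XX = {(x, y). \<bar>y\<bar> < \<bar>x\<bar>}"
definition YY :: "(int \<times> int) set" where "YY = {(x, y). \<bar>x\<bar> < \<bar>y\<bar>}"

fun reg :: "bool \<times> bool \<Rightarrow> (int \<times> int) set" where
  "reg (True, True) = {(x, y). \<bar>y\<bar> < \<bar>x\<bar> \<and> 0 \<le> x * y}"
| "reg (True, False) = {(x, y). \<bar>y\<bar> < \<bar>x\<bar> \<and> x * y \<le> 0}"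
| "reg (False, True) = {(x, y). \<bar>x\<bar> < \<bar>y\<bar> \<and> 0 \<le> x * y}"
| "reg (False, False) = {(x, y). \<bar>x\<bar> < \<bar>y\<bar> \<and> x * y \<le> 0}"

definition opp :: "bool \<times> bool \<Rightarrow> (int \<times> int) set" where
  "opp l = (if fst l then YY else XX)"

fun redl :: "(bool \<times> bool) list \<Rightarrow> bool" where
  "redl (a # b # ls) = ((fst a = fst b \<longrightarrow> snd a = snd b) \<and> redl (b # ls))"
| "redl _ = True"

lemma mult_nonneg_cases: "0 \<le> (x::int) * y \<longleftrightarrow> (0 \<le> x \<and> 0 \<le> y) \<or> (x \<le> 0 \<and> y \<le> 0)"
  by (auto simp: zero_le_mult_iff)
lemma mult_nonpos_cases: "(x::int) * y \<le> 0 \<longleftrightarrow> (0 \<le> x \<and> y \<le> 0) \<or> (x \<le> 0 \<and> 0 \<le> y)"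
  by (auto simp: mult_le_0_iff)

lemma act_reg: "v \<in> opp l \<union> reg l \<Longrightarrow> act l v \<in> reg l"
  apply (cases v; cases l; rename_tac x y a b; case_tac a; case_tac b)
  apply (auto simp: opp_def XX_def YY_def mult_nonneg_cases mult_nonpos_cases)
  done

lemma reg_opp: "fst l \<noteq> fst l' \<Longrightarrow> reg l' \<subseteq> opp l"
  by (cases l; cases l'; rename_tac a b c d; case_tac a; case_tac b; case_tac c; case_tac d)
     (auto simp: opp_def XX_def YY_def)

lemma act_inv: "act (fst l, \<not> snd l) (act l v) = v"
  by (cases v; cases l; rename_tac x y a b; case_tac a; case_tac b) auto

lemma invariant: "redl (l # ls) \<Longrightarrow> v \<in> opp (last (l # ls)) \<Longrightarrow> applyW (l # ls) v \<in> reg l"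
proof (induction ls arbitrary: l)
  case Nil
  then show ?case using act_reg[of v l] by (simp add: applyW_def)
next
  case (Cons l' ls)
  have r: "redl (l' # ls)" and c: "fst l = fst l' \<longrightarrow> snd l = snd l'" using Cons.prems by auto
  have "applyW (l' # ls) v \<in> reg l'" using Cons.IH[OF r] Cons.prems by simp
  moreover have "reg l' \<subseteq> opp l \<union> reg l"
  proof (cases "fst l = fst l'")
    case True then have "l = l'" using c by (simp add: prod_eq_iff)
    then show ?thesis by auto
  next
    case False then show ?thesis using reg_opp[of l l'] by auto
  qed
  ultimately have "act l (applyW (l' # ls) v) \<in> reg l" using act_reg[of "applyW (l' # ls) v" l] by blast
  then show ?case by (simp add: applyW_def)
qed

lemma redl_snoc: "redl (xs @ [y]) \<longleftrightarrow> redl xs \<and> (xs \<noteq> [] \<longrightarrow> (fst (last xs) = fst y \<longrightarrow> snd (last xs) = snd y))"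
  by (induction xs rule: redl.induct) auto

lemma reg_sub: "reg l \<subseteq> (if fst l then XX else YY)"
  by (cases l; rename_tac a b; case_tac a; case_tac b) (auto simp: XX_def YY_def)

lemma sanov_same:
  assumes "redl ls" "ls \<noteq> []" "fst (hd ls) = fst (last ls)"
  shows "\<exists>v. applyW ls v \<noteq> v"
proof -
  obtain l ls' where ls: "ls = l # ls'" using assms(2) by (cases ls) auto
  define v where "v = (if fst (last ls) then (0::int, 1::int) else (1, 0))"
  have "v \<in> opp (last ls)" by (auto simp: v_def opp_def XX_def YY_def)
  then have "applyW ls v \<in> reg l" using invariant assms ls by auto
  then have "applyW ls v \<in> (if fst l then XX else YY)" using reg_sub by blast
  moreover have "v \<notin> (if fst l then XX else YY)" using assms(3) ls by (auto simp: v_def XX_def YY_def)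
  ultimately show ?thesis by metis
qed

lemma sanov:
  assumes "redl ls" "ls \<noteq> []"
  shows "\<exists>v. applyW ls v \<noteq> v"
proof (cases "fst (hd ls) = fst (last ls)")
  case True then show ?thesis using sanov_same assms by blast
next
  case False
  define l where "l = last ls"
  define ls2 where "ls2 = (fst l, \<not> snd l) # ls @ [l]"
  have "redl (ls @ [l])" using assms by (simp add: redl_snoc l_def)
  then have "redl ls2" using False assms(2) by (cases ls) (auto simp: ls2_def l_def)
  moreover have "fst (hd ls2) = fst (last ls2)" by (simp add: ls2_def)
  ultimately have "\<exists>v. applyW ls2 v \<noteq> v" using sanov_same[of ls2] by (simp add: ls2_def)
  then obtain v where v: "applyW ls2 v \<noteq> v" by blast
  show ?thesis
  proof (rule ccontr)
    assume "\<not> ?thesis"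
    then have "applyW ls (act l v) = act l v" by (metis surj_pair)
    then have "applyW ls2 v = v" by (simp add: ls2_def applyW_def act_inv)
    then show False using v by simp
  qed
qed


locale mu = ring R for R (structure) +
  fixes sc :: "'k::field_char_0 \<Rightarrow> 'a" and E11 E12 E21 :: 'a
  assumes sc_carr [simp]: "sc c \<in> carrier R"
    and sc_add: "sc (c + d) = sc c \<oplus> sc d"
    and sc_mult: "sc (c * d) = sc c \<otimes> sc d"
    and sc_one: "sc 1 = \<one>"
    and sc_comm: "x \<in> carrier R \<Longrightarrow> sc c \<otimes> x = x \<otimes> sc c"
    and E_carr [simp]: "E11 \<in> carrier R" "E12 \<in> carrier R" "E21 \<in> carrier R"
    and r1: "E12 \<otimes> E11 = \<zero>" and r2: "E12 \<otimes> E21 = E11" and r3: "E12 \<otimes> E12 = \<zero>"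
    and r4: "E21 \<otimes> E11 = E21" and r5: "E21 \<otimes> E21 = \<zero>" and r6: "E11 \<otimes> E11 = E11"
    and r7: "E11 \<otimes> E21 = \<zero>"
    and E11_nz: "E11 \<noteq> \<zero>"
begin

lemma sc_zero: "sc 0 = \<zero>"
proof -
  have "sc 0 \<oplus> sc 0 = sc 0 \<oplus> \<zero>" using sc_add[of 0 0] by (metis add_0_right r_zero sc_carr)
  then show ?thesis by (metis add.l_cancel sc_carr zero_closed)
qed

lemma sc_prod: "P \<in> carrier R \<Longrightarrow> Q \<in> carrier R \<Longrightarrow> (sc c \<otimes> P) \<otimes> (sc d \<otimes> Q) = sc (c * d) \<otimes> (P \<otimes> Q)"
proof -
  assume P: "P \<in> carrier R" and Q: "Q \<in> carrier R"
  have "(sc c \<otimes> P) \<otimes> (sc d \<otimes> Q) = sc c \<otimes> ((P \<otimes> sc d) \<otimes> Q)" using P Q by (simp add: m_assoc)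
  also have "\<dots> = sc c \<otimes> ((sc d \<otimes> P) \<otimes> Q)" using P by (simp add: sc_comm)
  also have "\<dots> = sc (c * d) \<otimes> (P \<otimes> Q)" using P Q by (simp add: m_assoc sc_mult)
  finally show ?thesis .
qed

lemma sc_ladd: "P \<in> carrier R \<Longrightarrow> sc (c + d) \<otimes> P = sc c \<otimes> P \<oplus> sc d \<otimes> P"
  by (simp add: sc_add l_distr)

lemma sc_E11_zero: assumes "sc c \<otimes> E11 = \<zero>" shows "c = 0"
proof (rule ccontr)
  assume c: "c \<noteq> 0"
  have "E11 = sc (inverse c * c) \<otimes> E11" using c by (simp add: sc_one)
  also have "\<dots> = sc (inverse c) \<otimes> (sc c \<otimes> E11)" by (simp add: sc_mult m_assoc)
  also have "\<dots> = \<zero>" using assms by simp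
  finally show False using E11_nz by simp
qed

lemma sc_E11_inj: assumes "sc c \<otimes> E11 = sc d \<otimes> E11" shows "c = d"
proof -
  have "sc (c - d) \<otimes> E11 \<oplus> sc d \<otimes> E11 = sc d \<otimes> E11 \<oplus> \<zero>"
    using assms sc_ladd[of E11 "c - d" d] by simp
  then have "sc (c - d) \<otimes> E11 = \<zero>" by (simp add: add.r_cancel_one')
  then show ?thesis using sc_E11_zero[of "c - d"] by simp
qed

definition col :: "'k \<Rightarrow> 'k \<Rightarrow> 'a" where "col a b = sc a \<otimes> E11 \<oplus> sc b \<otimes> E21"

lemma col_carr [simp]: "col a b \<in> carrier R" by (simp add: col_def)

lemma E11_col: "E11 \<otimes> col a b = sc a \<otimes> E11"
proof -
  have "E11 \<otimes> col a b = (sc 1 \<otimes> E11) \<otimes> (sc a \<otimes> E11) \<oplus> (sc 1 \<otimes> E11) \<otimes> (sc b \<otimes> E21)"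
    by (simp add: col_def r_distr sc_one)
  also have "\<dots> = sc a \<otimes> E11" by (simp only: sc_prod E_carr r6 r7) simp
  finally show ?thesis .
qed

lemma E12_col: "E12 \<otimes> col a b = sc b \<otimes> E11"
proof -
  have "E12 \<otimes> col a b = (sc 1 \<otimes> E12) \<otimes> (sc a \<otimes> E11) \<oplus> (sc 1 \<otimes> E12) \<otimes> (sc b \<otimes> E21)"
    by (simp add: col_def r_distr sc_one)
  also have "\<dots> = sc b \<otimes> E11" by (simp only: sc_prod E_carr r1 r2) simp
  finally show ?thesis .
qed

lemma col_inj: "col a b = col c d \<Longrightarrow> a = c \<and> b = d"
  by (metis E11_col E12_col sc_E11_inj)

definition TT :: "'k \<Rightarrow> 'a" where "TT c = \<one> \<oplus> sc c \<otimes> E12"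
definition SS :: "'k \<Rightarrow> 'a" where "SS c = \<one> \<oplus> sc c \<otimes> E21"

lemma TT_carr [simp]: "TT c \<in> carrier R" and SS_carr [simp]: "SS c \<in> carrier R"
  by (simp_all add: TT_def SS_def)

lemma TT_col: "TT c \<otimes> col a b = col (a + c * b) b"
proof -
  have "TT c \<otimes> col a b = col a b \<oplus> (sc c \<otimes> E12) \<otimes> (sc a \<otimes> E11) \<oplus> (sc c \<otimes> E12) \<otimes> (sc b \<otimes> E21)"
    by (simp add: TT_def col_def l_distr r_distr a_ac)
  also have "\<dots> = col a b \<oplus> sc (c * b) \<otimes> E11" by (simp only: sc_prod E_carr r1 r2) simp
  also have "\<dots> = col (a + c * b) b" by (simp add: col_def sc_ladd a_ac)
  finally show ?thesis .
qed

lemma SS_col: "SS c \<otimes> col a b = col a (b + c * a)"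
proof -
  have "SS c \<otimes> col a b = col a b \<oplus> (sc c \<otimes> E21) \<otimes> (sc a \<otimes> E11) \<oplus> (sc c \<otimes> E21) \<otimes> (sc b \<otimes> E21)"
    by (simp add: SS_def col_def l_distr r_distr a_ac)
  also have "\<dots> = col a b \<oplus> sc (c * a) \<otimes> E21" by (simp only: sc_prod E_carr r4 r5) simp
  also have "\<dots> = col a (b + c * a)" by (simp add: col_def sc_ladd a_ac)
  finally show ?thesis .
qed

lemma TT_mult: "TT c \<otimes> TT d = TT (c + d)"
proof -
  have "TT c \<otimes> TT d = \<one> \<oplus> sc d \<otimes> E12 \<oplus> sc c \<otimes> E12 \<oplus> (sc c \<otimes> E12) \<otimes> (sc d \<otimes> E12)"
    by (simp add: TT_def l_distr r_distr a_ac)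
  also have "\<dots> = \<one> \<oplus> sc d \<otimes> E12 \<oplus> sc c \<otimes> E12" by (simp only: sc_prod E_carr r3) simp
  also have "\<dots> = TT (c + d)" by (simp add: TT_def sc_ladd a_ac)
  finally show ?thesis .
qed

lemma SS_mult: "SS c \<otimes> SS d = SS (c + d)"
proof -
  have "SS c \<otimes> SS d = \<one> \<oplus> sc d \<otimes> E21 \<oplus> sc c \<otimes> E21 \<oplus> (sc c \<otimes> E21) \<otimes> (sc d \<otimes> E21)"
    by (simp add: SS_def l_distr r_distr a_ac)
  also have "\<dots> = \<one> \<oplus> sc d \<otimes> E21 \<oplus> sc c \<otimes> E21" by (simp only: sc_prod E_carr r5) simp
  also have "\<dots> = SS (c + d)" by (simp add: SS_def sc_ladd a_ac)
  finally show ?thesis .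
qed

lemma TT0: "TT 0 = \<one>" and SS0: "SS 0 = \<one>"
  by (simp_all add: TT_def SS_def sc_zero)

lemma TT_Units: "TT c \<in> Units R" and TT_inv: "inv (TT c) = TT (- c)"
proof -
  have "TT c \<otimes> TT (- c) = \<one>" "TT (- c) \<otimes> TT c = \<one>" by (simp_all add: TT_mult TT0)
  then show "TT c \<in> Units R" "inv (TT c) = TT (- c)" by (auto simp: Units_def intro: inv_char)
qed

lemma SS_Units: "SS c \<in> Units R" and SS_inv: "inv (SS c) = SS (- c)"
proof -
  have "SS c \<otimes> SS (- c) = \<one>" "SS (- c) \<otimes> SS c = \<one>" by (simp_all add: SS_mult SS0)
  then show "SS c \<in> Units R" "inv (SS c) = SS (- c)" by (auto simp: Units_def intro: inv_char)
qed

abbreviation "GG \<equiv> units_of R"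
abbreviation "uu \<equiv> TT 2"
abbreviation "ww \<equiv> SS 2"

lemma uw_ne: "uu \<noteq> ww"
proof
  assume "uu = ww"
  then have "col (0 + 2 * 1) 1 = col 0 (1 + 2 * 0)" by (metis TT_col SS_col)
  then show False using col_inj by fastforce
qed

definition colI :: "int \<times> int \<Rightarrow> 'a" where "colI v = col (of_int (fst v)) (of_int (snd v))"

lemma colI_inj: "colI v = colI v' \<Longrightarrow> v = v'"
  by (auto simp: colI_def prod_eq_iff dest!: col_inj)

lemma group_GG: "group GG" by (rule units_group)

lemma GG_inv_uu: "inv\<^bsub>GG\<^esub> uu = TT (- 2)"
  using units_of_inv[OF TT_Units] TT_inv by simp
lemma GG_inv_ww: "inv\<^bsub>GG\<^esub> ww = SS (- 2)"
  using units_of_inv[OF SS_Units] SS_inv by simp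

lemma word_eval_carr:
  assumes "set (map fst ws) \<subseteq> carrier GG"
  shows "word_eval GG ws \<in> carrier GG"
  using assms
proof (induction ws)
  case Nil then show ?case by (simp add: word_eval_def group.is_monoid[OF group_GG] monoid.one_closed)
next
  case (Cons a ws)
  then show ?case
    by (cases a) (auto simp: word_eval_def group.inv_closed[OF group_GG] monoid.m_closed[OF group.is_monoid[OF group_GG]])
qed

lemma word_eval_Cons: "word_eval G ((b, e) # ws) = (if e then b else inv\<^bsub>G\<^esub> b) \<otimes>\<^bsub>G\<^esub> word_eval G ws"
  by (simp add: word_eval_def)

lemma word_eval_col:
  assumes "set (map fst ws) \<subseteq> {uu, ww}"
  shows "word_eval GG ws \<otimes> colI v = colI (applyW (map (\<lambda>p. (fst p = uu, snd p)) ws) v)"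
  using assms
proof (induction ws)
  case Nil then show ?case by (simp add: word_eval_def units_of_one applyW_def colI_def)
next
  case (Cons a ws)
  obtain b e where a: "a = (b, e)" by (cases a)
  have ws: "set (map fst ws) \<subseteq> carrier GG" using Cons.prems
    by (auto simp: units_of_carrier TT_Units SS_Units)
  have W: "word_eval GG ws \<in> carrier R" using word_eval_carr[OF ws] by (auto simp: units_of_carrier)
  have IH: "word_eval GG ws \<otimes> colI v = colI (applyW (map (\<lambda>p. (fst p = uu, snd p)) ws) v)"
    using Cons by simp
  obtain x y where xy: "applyW (map (\<lambda>p. (fst p = uu, snd p)) ws) v = (x, y)" by fastforce
  have b: "b = uu \<or> b = ww" using Cons.prems a by auto
  define g where "g = (if e then b else inv\<^bsub>GG\<^esub> b)"
  have g: "g \<in> carrier R" using b by (auto simp: g_def GG_inv_uu GG_inv_ww)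
  have "word_eval GG (a # ws) \<otimes> colI v = g \<otimes> (word_eval GG ws \<otimes> colI v)"
    using g W by (simp add: a word_eval_Cons g_def[symmetric] units_of_mult m_assoc colI_def)
  also have "\<dots> = g \<otimes> colI (x, y)" using IH xy by simp
  also have "\<dots> = colI (act (b = uu, e) (x, y))"
    using b uw_ne
    by (cases e) (auto simp: g_def GG_inv_uu GG_inv_ww colI_def TT_col SS_col algebra_simps)
  finally show ?case by (simp add: a applyW_def xy[unfolded applyW_def])
qed

lemma reduced_word_Cons2:
  "reduced_word (a # b # ws) \<Longrightarrow> \<not> (fst a = fst b \<and> snd a \<noteq> snd b) \<and> reduced_word (b # ws)"
  unfolding reduced_word_def
proof (intro conjI allI impI)
  assume H: "\<forall>i. Suc i < length (a # b # ws) \<longrightarrow>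
       \<not> (fst ((a # b # ws) ! i) = fst ((a # b # ws) ! Suc i) \<and> snd ((a # b # ws) ! i) \<noteq> snd ((a # b # ws) ! Suc i))"
  show "\<not> (fst a = fst b \<and> snd a \<noteq> snd b)" using H[rule_format, of 0] by simp
  fix i assume "Suc i < length (b # ws)"
  then show "\<not> (fst ((b # ws) ! i) = fst ((b # ws) ! Suc i) \<and> snd ((b # ws) ! i) \<noteq> snd ((b # ws) ! Suc i))"
    using H[rule_format, of "Suc i"] by simp
qed

lemma reduced_redl:
  "reduced_word ws \<Longrightarrow> set (map fst ws) \<subseteq> {uu, ww} \<Longrightarrow> redl (map (\<lambda>p. (fst p = uu, snd p)) ws)"
proof (induction ws rule: induct_list012)
  case (3 a b ws)
  have "\<not> (fst a = fst b \<and> snd a \<noteq> snd b)" "reduced_word (b # ws)"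
    using reduced_word_Cons2[OF "3.prems"(1)] by auto
  moreover have "fst a = uu \<longleftrightarrow> fst b = uu \<Longrightarrow> fst a = fst b" using "3.prems"(2) by auto
  ultimately show ?case using "3.IH"(2) "3.prems"(2) by auto
qed auto

lemma comm_word:
  assumes "group G" "x \<in> carrier G" "y \<in> carrier G" "x \<otimes>\<^bsub>G\<^esub> y = y \<otimes>\<^bsub>G\<^esub> x"
  shows "x \<otimes>\<^bsub>G\<^esub> (y \<otimes>\<^bsub>G\<^esub> (inv\<^bsub>G\<^esub> x \<otimes>\<^bsub>G\<^esub> (inv\<^bsub>G\<^esub> y \<otimes>\<^bsub>G\<^esub> \<one>\<^bsub>G\<^esub>))) = \<one>\<^bsub>G\<^esub>"
proof -
  interpret G: group G by fact
  have "x \<otimes>\<^bsub>G\<^esub> (y \<otimes>\<^bsub>G\<^esub> (inv\<^bsub>G\<^esub> x \<otimes>\<^bsub>G\<^esub> (inv\<^bsub>G\<^esub> y \<otimes>\<^bsub>G\<^esub> \<one>\<^bsub>G\<^esub>)))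
      = (x \<otimes>\<^bsub>G\<^esub> y) \<otimes>\<^bsub>G\<^esub> (inv\<^bsub>G\<^esub> x \<otimes>\<^bsub>G\<^esub> inv\<^bsub>G\<^esub> y)"
    using assms(2,3) by (simp add: G.m_assoc)
  also have "\<dots> = (y \<otimes>\<^bsub>G\<^esub> x) \<otimes>\<^bsub>G\<^esub> (inv\<^bsub>G\<^esub> x \<otimes>\<^bsub>G\<^esub> inv\<^bsub>G\<^esub> y)" by (simp only: assms(4))
  also have "\<dots> = y \<otimes>\<^bsub>G\<^esub> (x \<otimes>\<^bsub>G\<^esub> (inv\<^bsub>G\<^esub> x \<otimes>\<^bsub>G\<^esub> inv\<^bsub>G\<^esub> y))"
    using assms(2,3) by (intro G.m_assoc) auto
  also have "x \<otimes>\<^bsub>G\<^esub> (inv\<^bsub>G\<^esub> x \<otimes>\<^bsub>G\<^esub> inv\<^bsub>G\<^esub> y) = inv\<^bsub>G\<^esub> y"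
    using assms(2,3) by (simp add: G.m_assoc[symmetric])
  also have "y \<otimes>\<^bsub>G\<^esub> inv\<^bsub>G\<^esub> y = \<one>\<^bsub>G\<^esub>" using assms(3) by simp
  finally show ?thesis .
qed

theorem free_noncyclic: "\<exists>H. free_subgroup GG H \<and> \<not> cyclic_subgroup GG H"
proof -
  define B where "B = {uu, ww}"
  have Bc: "B \<subseteq> carrier GG" by (auto simp: B_def units_of_carrier TT_Units SS_Units)
  have fb: "free_basis GG B"
    unfolding free_basis_def
  proof (intro conjI allI impI Bc)
    fix ws :: "('a \<times> bool) list"
    assume A: "ws \<noteq> [] \<and> set (map fst ws) \<subseteq> B \<and> reduced_word ws"
    define ls where "ls = map (\<lambda>p. (fst p = uu, snd p)) ws"
    have rl: "redl ls" "ls \<noteq> []" using A reduced_redl by (auto simp: ls_def B_def)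
    show "word_eval GG ws \<noteq> \<one>\<^bsub>GG\<^esub>"
    proof
      assume E: "word_eval GG ws = \<one>\<^bsub>GG\<^esub>"
      have "applyW ls v = v" for v
      proof -
        have "colI (applyW ls v) = word_eval GG ws \<otimes> colI v"
          using word_eval_col[of ws v] A by (simp add: ls_def B_def)
        also have "\<dots> = colI v" using E by (simp add: units_of_one colI_def)
        finally show ?thesis by (rule colI_inj)
      qed
      then show False using sanov[OF rl] by simp
    qed
  qed
  define H where "H = generate GG B"
  have sg: "subgroup H GG" unfolding H_def by (rule group.generate_is_subgroup[OF group_GG Bc])
  have nc: "\<not> cyclic_subgroup GG H"
  proof
    assume "cyclic_subgroup GG H"
    then obtain g where g: "g \<in> carrier GG" "H = generate GG {g}" by (auto simp: cyclic_subgroup_def)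
    have "uu \<in> H" "ww \<in> H" unfolding H_def B_def by (auto intro: generate.incl)
    then obtain i j where ij: "uu = g [^]\<^bsub>GG\<^esub> (i::int)" "ww = g [^]\<^bsub>GG\<^esub> (j::int)"
      using group.generate_pow[OF group_GG g(1)] g(2) by auto
    have cm: "uu \<otimes>\<^bsub>GG\<^esub> ww = ww \<otimes>\<^bsub>GG\<^esub> uu"
      using ij group.int_pow_mult[OF group_GG g(1), of i j] group.int_pow_mult[OF group_GG g(1), of j i]
      by (simp add: add.commute)
    define ws where "ws = [(uu, True), (ww, True), (uu, False), (ww, False)]"
    have "reduced_word ws" using uw_ne
      by (auto simp: reduced_word_def ws_def less_Suc_eq nth_Cons split: nat.splits)
    moreover have "set (map fst ws) \<subseteq> B" by (auto simp: ws_def B_def)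
    moreover have "word_eval GG ws = \<one>\<^bsub>GG\<^esub>"
      using comm_word[OF group_GG _ _ cm] Bc by (simp add: ws_def word_eval_def B_def)
    ultimately show False using fb by (auto simp: free_basis_def ws_def)
  qed
  show ?thesis using sg fb nc by (auto simp: free_subgroup_def H_def)
qed

end


lemma (in ring) centr_closed:
  assumes T: "T \<subseteq> carrier R"
  defines "C \<equiv> {y \<in> carrier R. \<forall>g\<in>T. y \<otimes> g = g \<otimes> y}"
  shows "\<zero> \<in> C" "x \<in> C \<Longrightarrow> y \<in> C \<Longrightarrow> x \<oplus> y \<in> C" "x \<in> C \<Longrightarrow> y \<in> C \<Longrightarrow> x \<otimes> y \<in> C"
proof -
  show "\<zero> \<in> C" using T by (auto simp: C_def)
next
  assume x: "x \<in> C" and y: "y \<in> C"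
  show "x \<oplus> y \<in> C"
  proof -
    have "(x \<oplus> y) \<otimes> g = g \<otimes> (x \<oplus> y)" if "g \<in> T" for g
      using x y that T by (auto simp: C_def l_distr r_distr)
    then show ?thesis using x y by (auto simp: C_def)
  qed
next
  assume x: "x \<in> C" and y: "y \<in> C"
  show "x \<otimes> y \<in> C"
  proof -
    have "(x \<otimes> y) \<otimes> g = g \<otimes> (x \<otimes> y)" if g: "g \<in> T" for g
    proof -
      have gc: "g \<in> carrier R" using g T by auto
      have xc: "x \<in> carrier R" and yc: "y \<in> carrier R" using x y by (auto simp: C_def)
      have "(x \<otimes> y) \<otimes> g = x \<otimes> (y \<otimes> g)" using xc yc gc by (simp add: m_assoc)
      also have "\<dots> = x \<otimes> (g \<otimes> y)" using y g by (simp add: C_def)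
      also have "\<dots> = (x \<otimes> g) \<otimes> y" using xc yc gc by (simp add: m_assoc)
      also have "\<dots> = (g \<otimes> x) \<otimes> y" using x g by (simp add: C_def)
      also have "\<dots> = g \<otimes> (x \<otimes> y)" using xc yc gc by (simp add: m_assoc)
      finally show ?thesis .
    qed
    then show ?thesis using x y by (auto simp: C_def)
  qed
qed

lemma (in ring) assoc4: "x \<in> carrier R \<Longrightarrow> y \<in> carrier R \<Longrightarrow> z \<in> carrier R \<Longrightarrow> w \<in> carrier R \<Longrightarrow>
  (x \<otimes> y) \<otimes> (z \<otimes> w) = x \<otimes> (y \<otimes> z) \<otimes> w"
  by (simp add: m_assoc)

context lpa
begin

lemma gen_carr: "a \<in> lgens V E \<Longrightarrow> pi (mono [a]) \<in> carrier L"
  by (simp add: pi_carr mono1_carr)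

lemma gen_cases:
  assumes "a \<in> lgens V E"
  obtains v where "v \<in> V" "pi (mono [a]) = Gv v" | e where "e \<in> E" "pi (mono [a]) = Ge e"
    | e where "e \<in> E" "pi (mono [a]) = Gg e"
  using assms by (auto simp: lgens_def Gv_def Ge_def Gg_def)

lemma comm_case:
  assumes loops: "\<And>e. e \<in> E \<Longrightarrow> s e = r e"
    and inj: "\<And>e f. e \<in> E \<Longrightarrow> f \<in> E \<Longrightarrow> r e = r f \<Longrightarrow> e = f"
    and x: "x \<in> carrier L" and y: "y \<in> carrier L"
  shows "x \<otimes>\<^bsub>L\<^esub> y = y \<otimes>\<^bsub>L\<^esub> x"
proof -
  interpret L: ring L by (rule ringL)
  note GC = Gv_carr Ge_carr Gg_carr rv sv
  have VV: "Gv v \<otimes>\<^bsub>L\<^esub> Gv v' = Gv v' \<otimes>\<^bsub>L\<^esub> Gv v" if "v \<in> V" "v' \<in> V" for v v'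
    using R1[OF that] R1[OF that(2,1)] by auto
  have VE: "Gv v \<otimes>\<^bsub>L\<^esub> Ge e = Ge e \<otimes>\<^bsub>L\<^esub> Gv v" if "v \<in> V" "e \<in> E" for v e
  proof -
    have "Gv v \<otimes>\<^bsub>L\<^esub> Ge e = (Gv v \<otimes>\<^bsub>L\<^esub> Gv (s e)) \<otimes>\<^bsub>L\<^esub> Ge e"
      using R2[OF that(2)] that GC by (simp add: L.m_assoc)
    also have "\<dots> = (if v = s e then Ge e else \<zero>\<^bsub>L\<^esub>)"
      using R1[of v "s e"] R2[OF that(2)] that GC by auto
    also have "\<dots> = Ge e \<otimes>\<^bsub>L\<^esub> (Gv (r e) \<otimes>\<^bsub>L\<^esub> Gv v)"
      using R1[of "r e" v] R3[OF that(2)] that GC loops[OF that(2)] by auto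
    also have "\<dots> = Ge e \<otimes>\<^bsub>L\<^esub> Gv v"
      using R3[OF that(2)] that GC by (simp add: L.m_assoc[symmetric])
    finally show ?thesis .
  qed
  have VG: "Gv v \<otimes>\<^bsub>L\<^esub> Gg e = Gg e \<otimes>\<^bsub>L\<^esub> Gv v" if "v \<in> V" "e \<in> E" for v e
  proof -
    have "Gv v \<otimes>\<^bsub>L\<^esub> Gg e = (Gv v \<otimes>\<^bsub>L\<^esub> Gv (r e)) \<otimes>\<^bsub>L\<^esub> Gg e"
      using R4[OF that(2)] that GC by (simp add: L.m_assoc)
    also have "\<dots> = (if v = r e then Gg e else \<zero>\<^bsub>L\<^esub>)"
      using R1[of v "r e"] R4[OF that(2)] that GC by auto
    also have "\<dots> = Gg e \<otimes>\<^bsub>L\<^esub> (Gv (s e) \<otimes>\<^bsub>L\<^esub> Gv v)"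
      using R1[of "s e" v] R5[OF that(2)] that GC loops[OF that(2)] by auto
    also have "\<dots> = Gg e \<otimes>\<^bsub>L\<^esub> Gv v"
      using R5[OF that(2)] that GC by (simp add: L.m_assoc[symmetric])
    finally show ?thesis .
  qed
  have EE0: "Ge e \<otimes>\<^bsub>L\<^esub> Ge f = \<zero>\<^bsub>L\<^esub>" if "e \<in> E" "f \<in> E" "e \<noteq> f" for e f
  proof -
    have ne: "r e \<noteq> s f" using inj that loops by metis
    have "Ge e \<otimes>\<^bsub>L\<^esub> Ge f = (Ge e \<otimes>\<^bsub>L\<^esub> Gv (r e)) \<otimes>\<^bsub>L\<^esub> (Gv (s f) \<otimes>\<^bsub>L\<^esub> Ge f)"
      using R2 R3 that by simp
    also have "\<dots> = Ge e \<otimes>\<^bsub>L\<^esub> (Gv (r e) \<otimes>\<^bsub>L\<^esub> Gv (s f)) \<otimes>\<^bsub>L\<^esub> Ge f"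
      using that GC by (simp add: L.assoc4)
    also have "\<dots> = \<zero>\<^bsub>L\<^esub>" using R1[of "r e" "s f"] ne that GC by simp
    finally show ?thesis .
  qed
  have GG0: "Gg e \<otimes>\<^bsub>L\<^esub> Gg f = \<zero>\<^bsub>L\<^esub>" if "e \<in> E" "f \<in> E" "e \<noteq> f" for e f
  proof -
    have ne: "s e \<noteq> r f" using inj that loops by metis
    have "Gg e \<otimes>\<^bsub>L\<^esub> Gg f = (Gg e \<otimes>\<^bsub>L\<^esub> Gv (s e)) \<otimes>\<^bsub>L\<^esub> (Gv (r f) \<otimes>\<^bsub>L\<^esub> Gg f)"
      using R4 R5 that by simp
    also have "\<dots> = Gg e \<otimes>\<^bsub>L\<^esub> (Gv (s e) \<otimes>\<^bsub>L\<^esub> Gv (r f)) \<otimes>\<^bsub>L\<^esub> Gg f"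
      using that GC by (simp add: L.assoc4)
    also have "\<dots> = \<zero>\<^bsub>L\<^esub>" using R1[of "s e" "r f"] ne that GC by simp
    finally show ?thesis .
  qed
  have EG: "Ge e \<otimes>\<^bsub>L\<^esub> Gg f = Gg f \<otimes>\<^bsub>L\<^esub> Ge e" if "e \<in> E" "f \<in> E" for e f
  proof (cases "e = f")
    case True
    have "{e' \<in> E. s e' = s e} = {e}" using that inj loops by auto
    then have "Ge e \<otimes>\<^bsub>L\<^esub> Gg e = Gv (s e)" using CK1 that by simp
    also have "\<dots> = Gg e \<otimes>\<^bsub>L\<^esub> Ge e" using R6[of e e] that loops by simp
    finally show ?thesis using True by simp
  next
    case False
    have ne: "r e \<noteq> r f" using inj that False by metis
    have "Ge e \<otimes>\<^bsub>L\<^esub> Gg f = (Ge e \<otimes>\<^bsub>L\<^esub> Gv (r e)) \<otimes>\<^bsub>L\<^esub> (Gv (r f) \<otimes>\<^bsub>L\<^esub> Gg f)"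
      using R3 R4 that by simp
    also have "\<dots> = Ge e \<otimes>\<^bsub>L\<^esub> (Gv (r e) \<otimes>\<^bsub>L\<^esub> Gv (r f)) \<otimes>\<^bsub>L\<^esub> Gg f"
      using that GC by (simp add: L.assoc4)
    also have "\<dots> = \<zero>\<^bsub>L\<^esub>" using R1[of "r e" "r f"] ne that GC by simp
    also have "\<dots> = Gg f \<otimes>\<^bsub>L\<^esub> Ge e" using R6[of f e] that False by simp
    finally show ?thesis .
  qed
  have gen_comm: "pi (mono [a]) \<otimes>\<^bsub>L\<^esub> pi (mono [b]) = pi (mono [b]) \<otimes>\<^bsub>L\<^esub> pi (mono [a])"
    if "a \<in> lgens V E" "b \<in> lgens V E" for a b
  proof -
    have EEc: "Ge e \<otimes>\<^bsub>L\<^esub> Ge f = Ge f \<otimes>\<^bsub>L\<^esub> Ge e" if "e \<in> E" "f \<in> E" for e f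
      using EE0[OF that] EE0[OF that(2,1)] by (cases "e = f") auto
    have GGc: "Gg e \<otimes>\<^bsub>L\<^esub> Gg f = Gg f \<otimes>\<^bsub>L\<^esub> Gg e" if "e \<in> E" "f \<in> E" for e f
      using GG0[OF that] GG0[OF that(2,1)] by (cases "e = f") auto
    show ?thesis
    proof (rule gen_cases[OF that(1)])
      fix v assume av: "v \<in> V" "pi (mono [a]) = Gv v"
      show ?thesis
      proof (rule gen_cases[OF that(2)])
        fix v' assume bv: "v' \<in> V" "pi (mono [b]) = Gv v'"
        show ?thesis unfolding av(2) bv(2) by (rule VV; fact)
      next
        fix e assume bv: "e \<in> E" "pi (mono [b]) = Ge e"
        show ?thesis unfolding av(2) bv(2) by (rule VE; fact)
      next
        fix e assume bv: "e \<in> E" "pi (mono [b]) = Gg e"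
        show ?thesis unfolding av(2) bv(2) by (rule VG; fact)
      qed
    next
      fix f assume av: "f \<in> E" "pi (mono [a]) = Ge f"
      show ?thesis
      proof (rule gen_cases[OF that(2)])
        fix v' assume bv: "v' \<in> V" "pi (mono [b]) = Gv v'"
        show ?thesis unfolding av(2) bv(2) by (rule VE[symmetric]; fact)
      next
        fix e assume bv: "e \<in> E" "pi (mono [b]) = Ge e"
        show ?thesis unfolding av(2) bv(2) by (rule EEc; fact)
      next
        fix e assume bv: "e \<in> E" "pi (mono [b]) = Gg e"
        show ?thesis unfolding av(2) bv(2) by (rule EG; fact)
      qed
    next
      fix f assume av: "f \<in> E" "pi (mono [a]) = Gg f"
      show ?thesis
      proof (rule gen_cases[OF that(2)])
        fix v' assume bv: "v' \<in> V" "pi (mono [b]) = Gv v'"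
        show ?thesis unfolding av(2) bv(2) by (rule VG[symmetric]; fact)
      next
        fix e assume bv: "e \<in> E" "pi (mono [b]) = Ge e"
        show ?thesis unfolding av(2) bv(2) by (rule EG[symmetric]; fact)
      next
        fix e assume bv: "e \<in> E" "pi (mono [b]) = Gg e"
        show ?thesis unfolding av(2) bv(2) by (rule GGc; fact)
      qed
    qed
  qed
  define Gen where "Gen = range sc \<union> (\<lambda>a. pi (mono [a])) ` lgens V E"
  have GenC: "Gen \<subseteq> carrier L" by (auto simp: Gen_def sc_carr gen_carr)
  define C1 where "C1 = {y \<in> carrier L. \<forall>g\<in>Gen. y \<otimes>\<^bsub>L\<^esub> g = g \<otimes>\<^bsub>L\<^esub> y}"
  have C1: "pi f \<in> C1" if "f \<in> carrier FA" for f
  proof (rule gen_induct[OF _ _ _ _ _ _ that])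
    show "C1 \<subseteq> carrier L" by (auto simp: C1_def)
    show "\<zero>\<^bsub>L\<^esub> \<in> C1" using L.centr_closed(1)[OF GenC] by (simp add: C1_def)
    show "\<And>x y. x \<in> C1 \<Longrightarrow> y \<in> C1 \<Longrightarrow> x \<oplus>\<^bsub>L\<^esub> y \<in> C1"
      using L.centr_closed(2)[OF GenC] by (simp add: C1_def)
    show "\<And>x y. x \<in> C1 \<Longrightarrow> y \<in> C1 \<Longrightarrow> x \<otimes>\<^bsub>L\<^esub> y \<in> C1"
      using L.centr_closed(3)[OF GenC] by (simp add: C1_def)
    show "sc c \<in> C1" for c
    proof -
      have "sc c \<otimes>\<^bsub>L\<^esub> g = g \<otimes>\<^bsub>L\<^esub> sc c" if "g \<in> Gen" for g
        using that GenC by (intro sc_comm) auto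
      then show ?thesis by (simp add: C1_def sc_carr)
    qed
    show "pi (mono [a]) \<in> C1" if a: "a \<in> lgens V E" for a
    proof -
      have "pi (mono [a]) \<otimes>\<^bsub>L\<^esub> g = g \<otimes>\<^bsub>L\<^esub> pi (mono [a])" if g: "g \<in> Gen" for g
      proof -
        from g consider c where "g = sc c" | b where "b \<in> lgens V E" "g = pi (mono [b])"
          by (auto simp: Gen_def)
        then show ?thesis
        proof cases
          case 1 then show ?thesis using sc_comm[OF gen_carr[OF a], of c] by simp
        next
          case 2 then show ?thesis using gen_comm[OF a 2(1)] by simp
        qed
      qed
      then show ?thesis by (simp add: C1_def gen_carr a)
    qed
  qed
  define C2 where "C2 = {y \<in> carrier L. \<forall>g\<in>carrier L. y \<otimes>\<^bsub>L\<^esub> g = g \<otimes>\<^bsub>L\<^esub> y}"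
  have C2: "pi f \<in> C2" if "f \<in> carrier FA" for f
  proof (rule gen_induct[OF _ _ _ _ _ _ that])
    show "C2 \<subseteq> carrier L" by (auto simp: C2_def)
    show "\<zero>\<^bsub>L\<^esub> \<in> C2" unfolding C2_def by (rule L.centr_closed(1)[OF order_refl])
    show "\<And>x y. x \<in> C2 \<Longrightarrow> y \<in> C2 \<Longrightarrow> x \<oplus>\<^bsub>L\<^esub> y \<in> C2"
      unfolding C2_def by (rule L.centr_closed(2)[OF order_refl])
    show "\<And>x y. x \<in> C2 \<Longrightarrow> y \<in> C2 \<Longrightarrow> x \<otimes>\<^bsub>L\<^esub> y \<in> C2"
      unfolding C2_def by (rule L.centr_closed(3)[OF order_refl])
    show "sc c \<in> C2" for c
    proof -
      have "\<forall>g\<in>carrier L. sc c \<otimes>\<^bsub>L\<^esub> g = g \<otimes>\<^bsub>L\<^esub> sc c"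
        using sc_comm by blast
      then show ?thesis unfolding C2_def using sc_carr by blast
    qed
    show "pi (mono [a]) \<in> C2" if "a \<in> lgens V E" for a
    proof -
      have "pi (mono [a]) \<otimes>\<^bsub>L\<^esub> z = z \<otimes>\<^bsub>L\<^esub> pi (mono [a])" if z: "z \<in> carrier L" for z
      proof -
        obtain g where g: "g \<in> carrier FA" "z = pi g" using z carrL by blast
        have "z \<in> C1" unfolding g(2) by (rule C1[OF g(1)])
        then have zc: "\<forall>h\<in>Gen. z \<otimes>\<^bsub>L\<^esub> h = h \<otimes>\<^bsub>L\<^esub> z" unfolding C1_def by blast
        have "pi (mono [a]) \<in> Gen" using \<open>a \<in> lgens V E\<close> unfolding Gen_def by blast
        then have "z \<otimes>\<^bsub>L\<^esub> pi (mono [a]) = pi (mono [a]) \<otimes>\<^bsub>L\<^esub> z" using zc by blast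
        then show ?thesis by (rule sym)
      qed
      then have "\<forall>z\<in>carrier L. pi (mono [a]) \<otimes>\<^bsub>L\<^esub> z = z \<otimes>\<^bsub>L\<^esub> pi (mono [a])" by blast
      then show ?thesis unfolding C2_def using gen_carr[OF that] by blast
    qed
  qed
  obtain f where "f \<in> carrier FA" "x = pi f" using x carrL by auto
  then have "x \<in> C2" using C2 by simp
  then show ?thesis using y unfolding C2_def by blast
qed

end


context lpa
begin

lemma via_mu:
  assumes c: "E11 \<in> carrier L" "E12 \<in> carrier L" "E21 \<in> carrier L"
    and r1: "E12 \<otimes>\<^bsub>L\<^esub> E11 = \<zero>\<^bsub>L\<^esub>" and r2: "E12 \<otimes>\<^bsub>L\<^esub> E21 = E11" and r3: "E12 \<otimes>\<^bsub>L\<^esub> E12 = \<zero>\<^bsub>L\<^esub>"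
    and r4: "E21 \<otimes>\<^bsub>L\<^esub> E11 = E21" and r5: "E21 \<otimes>\<^bsub>L\<^esub> E21 = \<zero>\<^bsub>L\<^esub>" and r6: "E11 \<otimes>\<^bsub>L\<^esub> E11 = E11"
    and r7: "E11 \<otimes>\<^bsub>L\<^esub> E21 = \<zero>\<^bsub>L\<^esub>" and nz: "E11 \<noteq> \<zero>\<^bsub>L\<^esub>"
  shows "\<exists>H. free_subgroup (units_of L) H \<and> \<not> cyclic_subgroup (units_of L) H"
proof -
  have M: "mu L sc E11 E12 E21"
    by (rule mu.intro[OF ringL], rule mu_axioms.intro, rule sc_carr, rule sc_add, rule sc_mult, rule sc_one,
        erule sc_comm, (fact c r1 r2 r3 r4 r5 r6 r7 nz)+)
  show ?thesis by (rule mu.free_noncyclic[OF M])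
qed

lemma case_a:
  assumes e: "e \<in> E" and ne: "s e \<noteq> r e"
  shows "\<exists>H. free_subgroup (units_of L) H \<and> \<not> cyclic_subgroup (units_of L) H"
proof -
  interpret L: ring L by (rule ringL)
  define a where "a = Ge e"
  define g where "g = Gg e"
  define vr where "vr = Gv (r e)"
  define vs where "vs = Gv (s e)"
  have C: "a \<in> carrier L" "g \<in> carrier L" "vr \<in> carrier L" "vs \<in> carrier L"
    using e by (auto simp: a_def g_def vr_def vs_def Ge_carr Gg_carr Gv_carr rv sv)
  have R2': "vs \<otimes>\<^bsub>L\<^esub> a = a" using R2[OF e] by (simp add: a_def vs_def)
  have R3': "a \<otimes>\<^bsub>L\<^esub> vr = a" using R3[OF e] by (simp add: a_def vr_def)
  have R4': "vr \<otimes>\<^bsub>L\<^esub> g = g" using R4[OF e] by (simp add: g_def vr_def)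
  have R5': "g \<otimes>\<^bsub>L\<^esub> vs = g" using R5[OF e] by (simp add: g_def vs_def)
  have R6': "g \<otimes>\<^bsub>L\<^esub> a = vr" using R6[OF e e] by (simp add: a_def g_def vr_def)
  have rs: "vr \<otimes>\<^bsub>L\<^esub> vs = \<zero>\<^bsub>L\<^esub>" using R1[of "r e" "s e"] e ne by (simp add: vr_def vs_def rv sv)
  have sr: "vs \<otimes>\<^bsub>L\<^esub> vr = \<zero>\<^bsub>L\<^esub>" using R1[of "s e" "r e"] e ne by (simp add: vr_def vs_def rv sv)
  have rr: "vr \<otimes>\<^bsub>L\<^esub> vr = vr" using R1[of "r e" "r e"] e by (simp add: vr_def rv)
  have vnz: "vr \<noteq> \<zero>\<^bsub>L\<^esub>" using Gv_nz[OF rv[OF e]] by (simp add: vr_def)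
  have aa: "a \<otimes>\<^bsub>L\<^esub> a = \<zero>\<^bsub>L\<^esub>"
  proof -
    have "a \<otimes>\<^bsub>L\<^esub> a = (a \<otimes>\<^bsub>L\<^esub> vr) \<otimes>\<^bsub>L\<^esub> (vs \<otimes>\<^bsub>L\<^esub> a)" using R2' R3' by simp
    also have "\<dots> = a \<otimes>\<^bsub>L\<^esub> (vr \<otimes>\<^bsub>L\<^esub> vs) \<otimes>\<^bsub>L\<^esub> a" using C by (simp add: L.assoc4)
    also have "\<dots> = \<zero>\<^bsub>L\<^esub>" using C rs by simp
    finally show ?thesis .
  qed
  have gg: "g \<otimes>\<^bsub>L\<^esub> g = \<zero>\<^bsub>L\<^esub>"
  proof -
    have "g \<otimes>\<^bsub>L\<^esub> g = (g \<otimes>\<^bsub>L\<^esub> vs) \<otimes>\<^bsub>L\<^esub> (vr \<otimes>\<^bsub>L\<^esub> g)" using R4' R5' by simp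
    also have "\<dots> = g \<otimes>\<^bsub>L\<^esub> (vs \<otimes>\<^bsub>L\<^esub> vr) \<otimes>\<^bsub>L\<^esub> g" using C by (simp add: L.assoc4)
    also have "\<dots> = \<zero>\<^bsub>L\<^esub>" using C sr by simp
    finally show ?thesis .
  qed
  show ?thesis
  proof (rule via_mu[of "a \<otimes>\<^bsub>L\<^esub> g" a g])
    show "a \<otimes>\<^bsub>L\<^esub> g \<in> carrier L" "a \<in> carrier L" "g \<in> carrier L" using C by auto
    show "a \<otimes>\<^bsub>L\<^esub> (a \<otimes>\<^bsub>L\<^esub> g) = \<zero>\<^bsub>L\<^esub>" using C aa by (simp add: L.m_assoc[symmetric])
    show "a \<otimes>\<^bsub>L\<^esub> g = a \<otimes>\<^bsub>L\<^esub> g" ..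
    show "a \<otimes>\<^bsub>L\<^esub> a = \<zero>\<^bsub>L\<^esub>" by (rule aa)
    show "g \<otimes>\<^bsub>L\<^esub> (a \<otimes>\<^bsub>L\<^esub> g) = g" using C R6' R4' by (simp add: L.m_assoc[symmetric])
    show "g \<otimes>\<^bsub>L\<^esub> g = \<zero>\<^bsub>L\<^esub>" by (rule gg)
    show "(a \<otimes>\<^bsub>L\<^esub> g) \<otimes>\<^bsub>L\<^esub> (a \<otimes>\<^bsub>L\<^esub> g) = a \<otimes>\<^bsub>L\<^esub> g"
      using C R6' R3' by (simp add: L.assoc4)
    show "(a \<otimes>\<^bsub>L\<^esub> g) \<otimes>\<^bsub>L\<^esub> g = \<zero>\<^bsub>L\<^esub>" using C gg by (simp add: L.m_assoc)
    show "a \<otimes>\<^bsub>L\<^esub> g \<noteq> \<zero>\<^bsub>L\<^esub>"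
    proof
      assume z: "a \<otimes>\<^bsub>L\<^esub> g = \<zero>\<^bsub>L\<^esub>"
      have "vr = (g \<otimes>\<^bsub>L\<^esub> a) \<otimes>\<^bsub>L\<^esub> (g \<otimes>\<^bsub>L\<^esub> a)" using R6' rr by simp
      also have "\<dots> = g \<otimes>\<^bsub>L\<^esub> (a \<otimes>\<^bsub>L\<^esub> g) \<otimes>\<^bsub>L\<^esub> a" using C by (simp add: L.assoc4)
      also have "\<dots> = \<zero>\<^bsub>L\<^esub>" using C z by simp
      finally show False using vnz by simp
    qed
  qed
qed

lemma case_b:
  assumes e: "e \<in> E" and f: "f \<in> E" and ne: "e \<noteq> f" and rr_eq: "r e = r f"
  shows "\<exists>H. free_subgroup (units_of L) H \<and> \<not> cyclic_subgroup (units_of L) H"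
proof -
  interpret L: ring L by (rule ringL)
  define a where "a = Ge e"
  define b where "b = Ge f"
  define g where "g = Gg e"
  define h where "h = Gg f"
  define vr where "vr = Gv (r e)"
  have C: "a \<in> carrier L" "b \<in> carrier L" "g \<in> carrier L" "h \<in> carrier L" "vr \<in> carrier L"
    using e f by (auto simp: a_def b_def g_def h_def vr_def Ge_carr Gg_carr Gv_carr rv)
  have ga: "g \<otimes>\<^bsub>L\<^esub> a = vr" using R6[OF e e] by (simp add: a_def g_def vr_def)
  have hb: "h \<otimes>\<^bsub>L\<^esub> b = vr" using R6[OF f f] rr_eq by (simp add: b_def h_def vr_def)
  have ha: "h \<otimes>\<^bsub>L\<^esub> a = \<zero>\<^bsub>L\<^esub>" using R6[OF f e] ne by (simp add: a_def h_def)
  have gb: "g \<otimes>\<^bsub>L\<^esub> b = \<zero>\<^bsub>L\<^esub>" using R6[OF e f] ne by (simp add: b_def g_def)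
  have av: "a \<otimes>\<^bsub>L\<^esub> vr = a" using R3[OF e] by (simp add: a_def vr_def)
  have bv: "b \<otimes>\<^bsub>L\<^esub> vr = b" using R3[OF f] rr_eq by (simp add: b_def vr_def)
  have rr: "vr \<otimes>\<^bsub>L\<^esub> vr = vr" using R1[of "r e" "r e"] e by (simp add: vr_def rv)
  have vnz: "vr \<noteq> \<zero>\<^bsub>L\<^esub>" using Gv_nz[OF rv[OF e]] by (simp add: vr_def)
  show ?thesis
  proof (rule via_mu[of "a \<otimes>\<^bsub>L\<^esub> g" "a \<otimes>\<^bsub>L\<^esub> h" "b \<otimes>\<^bsub>L\<^esub> g"])
    show "a \<otimes>\<^bsub>L\<^esub> g \<in> carrier L" "a \<otimes>\<^bsub>L\<^esub> h \<in> carrier L" "b \<otimes>\<^bsub>L\<^esub> g \<in> carrier L" using C by auto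
    show "(a \<otimes>\<^bsub>L\<^esub> h) \<otimes>\<^bsub>L\<^esub> (a \<otimes>\<^bsub>L\<^esub> g) = \<zero>\<^bsub>L\<^esub>" using C ha by (simp add: L.assoc4)
    show "(a \<otimes>\<^bsub>L\<^esub> h) \<otimes>\<^bsub>L\<^esub> (b \<otimes>\<^bsub>L\<^esub> g) = a \<otimes>\<^bsub>L\<^esub> g" using C hb av by (simp add: L.assoc4)
    show "(a \<otimes>\<^bsub>L\<^esub> h) \<otimes>\<^bsub>L\<^esub> (a \<otimes>\<^bsub>L\<^esub> h) = \<zero>\<^bsub>L\<^esub>" using C ha by (simp add: L.assoc4)
    show "(b \<otimes>\<^bsub>L\<^esub> g) \<otimes>\<^bsub>L\<^esub> (a \<otimes>\<^bsub>L\<^esub> g) = b \<otimes>\<^bsub>L\<^esub> g" using C ga bv by (simp add: L.assoc4)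
    show "(b \<otimes>\<^bsub>L\<^esub> g) \<otimes>\<^bsub>L\<^esub> (b \<otimes>\<^bsub>L\<^esub> g) = \<zero>\<^bsub>L\<^esub>" using C gb by (simp add: L.assoc4)
    show "(a \<otimes>\<^bsub>L\<^esub> g) \<otimes>\<^bsub>L\<^esub> (a \<otimes>\<^bsub>L\<^esub> g) = a \<otimes>\<^bsub>L\<^esub> g" using C ga av by (simp add: L.assoc4)
    show "(a \<otimes>\<^bsub>L\<^esub> g) \<otimes>\<^bsub>L\<^esub> (b \<otimes>\<^bsub>L\<^esub> g) = \<zero>\<^bsub>L\<^esub>" using C gb by (simp add: L.assoc4)
    show "a \<otimes>\<^bsub>L\<^esub> g \<noteq> \<zero>\<^bsub>L\<^esub>"
    proof
      assume z: "a \<otimes>\<^bsub>L\<^esub> g = \<zero>\<^bsub>L\<^esub>"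
      have "vr = (g \<otimes>\<^bsub>L\<^esub> a) \<otimes>\<^bsub>L\<^esub> (g \<otimes>\<^bsub>L\<^esub> a)" using ga rr by simp
      also have "\<dots> = g \<otimes>\<^bsub>L\<^esub> (a \<otimes>\<^bsub>L\<^esub> g) \<otimes>\<^bsub>L\<^esub> a" using C by (simp add: L.assoc4)
      also have "\<dots> = \<zero>\<^bsub>L\<^esub>" using C z by simp
      finally show False using vnz by simp
    qed
  qed
qed

lemma lpa_main:
  assumes nc: "noncommutative L"
  shows "\<exists>H. free_subgroup (units_of L) H \<and> \<not> cyclic_subgroup (units_of L) H"
proof (cases "\<exists>e\<in>E. s e \<noteq> r e")
  case True then show ?thesis using case_a by blast
next
  case False
  note loops = False
  show ?thesis
  proof (cases "\<exists>e\<in>E. \<exists>f\<in>E. e \<noteq> f \<and> r e = r f")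
    case True then show ?thesis using case_b by blast
  next
    case False
    have "x \<otimes>\<^bsub>L\<^esub> y = y \<otimes>\<^bsub>L\<^esub> x" if "x \<in> carrier L" "y \<in> carrier L" for x y
      by (rule comm_case) (use loops False that in auto)
    then show ?thesis using nc by (auto simp: noncommutative_def)
  qed
qed

end

theorem theorem3p4:
  fixes V :: "'v set" and E :: "'e set" and r s :: "'e \<Rightarrow> 'v"
  assumes "finite V"
    and "r ` E \<subseteq> V" and "s ` E \<subseteq> V"
    and "noncommutative (leavitt V E r s :: (('v, 'e) lgen list \<Rightarrow> 'k::field_char_0) set ring)"
  shows "\<exists>H. free_subgroup (units_of (leavitt V E r s :: (('v, 'e) lgen list \<Rightarrow> 'k) set ring)) H
             \<and> \<not> cyclic_subgroup (units_of (leavitt V E r s :: (('v, 'e) lgen list \<Rightarrow> 'k) set ring)) H"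
proof -
  interpret lpa V E r s "TYPE('k)" using assms(1-3) by unfold_locales
  show ?thesis using lpa_main assms(4) by blast
qed


end
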